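(* There exist absolute constants $C_1,C_2>0$ such that the following holds. Let $\eta'\in(0,1)$, $k\in\mathbb{N}$, and $w=\lceil C_1k/(\eta')^2\rceil$. Let $\ell\in\mathbb{N}$, $\Delta=2^\ell$, $\mathbf{s}\in\mathbb{R}_{\ge0}^{G_\Delta}$, and let $\boldsymbol{\nu}_i\in\mathbb{R}^{C_{2^i}}$ ($i=0,\dots,\ell$) be arbitrary. Set $\mathbf{y}'_i=2^{-i}(\mathbf{P}_i\mathbf{s}+\boldsymbol{\nu}_i)$, $\mathbf{y}'=[\mathbf{y}'_0\cdots\mathbf{y}'_\ell]$. Run: $S_0=C_1$; for $i=1,\dots,\ell$, $T_i$ = children of cells in $S_{i-1}$, $S_i$ = a set of $\min\{w,|T_i|\}$ cells of $T_i$ with largest $\mathbf{y}'$-values; $S=\bigcup_iS_i$, $\hat{\mathbf{y}}=\mathbf{y}'|_S$; and let $\hat{\mathbf{s}}\in\arg\min_{\mathbf{s}'\in\mathbb{R}_{\ge0}^{G_\Delta}}\|\hat{\mathbf{y}}-\mathbf{P}\mathbf{s}'\|_1$. Let $\mathbf{y}^*\in\arg\min_{\mathbf{y}\in\mathcal{M}_w}\|\mathbf{P}\mathbf{s}-\mathbf{y}\|_1$, $T^*\in\mathcal{T}_w$ with $\mathrm{supp}(\mathbf{y}^* )\subseteq T^*$, and $V_i=(T^*\cap C_{2^i})\setminus S_i$. Then $$\|\mathbf{s}-\hat{\mathbf{s}}\|_{\mathrm{EMD}}\le\eta'\cdot\min_{\mathbf{s}'\ k\text{-sparse}}\|\mathbf{s}-\mathbf{s}'\|_{\mathrm{EMD}}+C_2\sum_{i=0}^\ell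 2^{-i}\big\|\boldsymbol{\nu}_i|_{V_i\cup S_i}\big\|_1,$$ the minimum over $k$-sparse $\mathbf{s}'\in\mathbb{R}^{G_\Delta}$.
   Context: $G_\Delta=\{(a/\Delta,b/\Delta): a,b\in\{0,\dots,\Delta-1\}\}$. Level-$i$ cells: $C_{2^i}=\{[a,a+2^{-i})\times[b,b+2^{-i}):(a,b)\in G_{2^i}\}$; $C_1$ is the single root cell $[0,1)^2$. $\mathbf{P}_i\in\{0,1\}^{C_{2^i}\times G_\Delta}$ with $\mathbf{P}_i(c,p)=1$ iff $p\in c$; $\mathbf{P}$ stacks $\mathbf{P}_0,2^{-1}\mathbf{P}_1,\dots,2^{-\ell}\mathbf{P}_\ell$. A cell $c'\in C_{2^i}$ is a child of $c\in C_{2^{i-1}}$ if $c'\subseteq c$ (a 4-ary tree rooted at $[0,1)^2$). $\mathcal{T}_w$: subtrees containing the root, closed under parents, with at most $w$ cells per level. $\mathcal{M}_w$: vectors $\mathbf{y}=[\mathbf{y}_0\cdots\mathbf{y}_\ell]$, $\mathbf{y}_i\in\mathbb{R}_{\ge0}^{C_{2^i}}$, with support in some $T\in\mathcal{T}_w$ and $\mathbf{y}(p)\ge2\sum_{c\text{ child of }p}\mathbf{y}(c)$ for all cells $p$ of levels $0,\dots,\ell-1$. $\mathbf{v}|_S$ is $\mathbf{v}$ restricted to $S$ (zero elsewhere); a vector is $k$-sparse if it has at most $k$ nonzero coordinates. $\mathrm{EMD}(\mathbf{p},\mathbf{q})$ for nonnegative $\mathbf{p},\mathbf{q}$ of equal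 mass is the minimum of $\sum\gamma(x,y)\|x-y\|_1$ over nonnegative couplings $\gamma$ with marginals $\mathbf{p},\mathbf{q}$; the EMD norm is $\|\mathbf{w}\|_{\mathrm{EMD}}=\min\{\mathrm{EMD}(\mathbf{p},\mathbf{q})+2\|\mathbf{r}\|_1:\mathbf{p},\mathbf{q}\ge0,\ \mathbf{p}-\mathbf{q}+\mathbf{r}=\mathbf{w},\ \|\mathbf{p}\|_1=\|\mathbf{q}\|_1\}$. *)

theory Defs
  imports Complex_Main
begin

text \<open>Grid points (a/Delta, b/Delta) with Delta = 2^l are represented by index pairs (a,b).
  Level-i cells [a 2^-i,(a+1)2^-i) x [b 2^-i,(b+1)2^-i) are represented by triples (i,a,b).\<close>

type_synonym point = "nat \<times> nat"
type_synonym cell = "nat \<times> nat \<times> nat"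

definition grid :: "nat \<Rightarrow> point set" where
  "grid l = {0..<2^l} \<times> {0..<2^l}"

definition grid_dist :: "nat \<Rightarrow> point \<Rightarrow> point \<Rightarrow> real" where
  "grid_dist l x y = (\<bar>real (fst x) - real (fst y)\<bar> + \<bar>real (snd x) - real (snd y)\<bar>) / 2^l"

definition cells :: "nat \<Rightarrow> cell set" where
  "cells i = {(i, a, b) | a b. a < 2^i \<and> b < 2^i}"

definition all_cells :: "nat \<Rightarrow> cell set" where
  "all_cells l = (\<Union>i\<le>l. cells i)"

definition root :: cell where "root = (0, 0, 0)"

definition level :: "cell \<Rightarrow> nat" where "level c = fst c"

definition parent :: "cell \<Rightarrow> cell" where
  "parent c = (case c of (i, a, b) \<Rightarrow> (i - 1, a div 2, b div 2))"

definition is_child :: "cell \<Rightarrow> cell \<Rightarrow> bool" where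
  "is_child c' c \<longleftrightarrow> level c' = level c + 1 \<and> parent c' = c"

definition in_cell :: "nat \<Rightarrow> cell \<Rightarrow> point \<Rightarrow> bool" where
  "in_cell l c p = (case c of (i, a, b) \<Rightarrow> fst p div 2^(l - i) = a \<and> snd p div 2^(l - i) = b)"

definition Pi_vec :: "nat \<Rightarrow> (point \<Rightarrow> real) \<Rightarrow> cell \<Rightarrow> real" where
  "Pi_vec l s c = (\<Sum>p\<in>grid l. if in_cell l c p then s p else 0)"

definition P_vec :: "nat \<Rightarrow> (point \<Rightarrow> real) \<Rightarrow> cell \<Rightarrow> real" where
  "P_vec l s c = Pi_vec l s c / 2 ^ level c"

definition l1_cells :: "nat \<Rightarrow> (cell \<Rightarrow> real) \<Rightarrow> real" where
  "l1_cells l y = (\<Sum>c\<in>all_cells l. \<bar>y c\<bar>)"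

definition l1_grid :: "nat \<Rightarrow> (point \<Rightarrow> real) \<Rightarrow> real" where
  "l1_grid l v = (\<Sum>p\<in>grid l. \<bar>v p\<bar>)"

definition trees :: "nat \<Rightarrow> nat \<Rightarrow> cell set set" where
  "trees l w = {T. T \<subseteq> all_cells l \<and> root \<in> T \<and>
      (\<forall>c\<in>T. level c > 0 \<longrightarrow> parent c \<in> T) \<and>
      (\<forall>i\<le>l. card (T \<inter> cells i) \<le> w)}"

definition model :: "nat \<Rightarrow> nat \<Rightarrow> (cell \<Rightarrow> real) set" where
  "model l w = {y. (\<forall>c\<in>all_cells l. y c \<ge> 0) \<and>
      (\<exists>T\<in>trees l w. \<forall>c\<in>all_cells l. y c \<noteq> 0 \<longrightarrow> c \<in> T) \<and>
      (\<forall>c\<in>all_cells l. level c < l \<longrightarrow>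
          y c \<ge> 2 * (\<Sum>c'\<in>{c'\<in>all_cells l. is_child c' c}. y c'))}"

definition emd :: "nat \<Rightarrow> (point \<Rightarrow> real) \<Rightarrow> (point \<Rightarrow> real) \<Rightarrow> real" where
  "emd l p q = Inf {(\<Sum>z\<in>grid l \<times> grid l. \<gamma> z * grid_dist l (fst z) (snd z)) | \<gamma>.
      (\<forall>z\<in>grid l \<times> grid l. \<gamma> z \<ge> 0) \<and>
      (\<forall>x\<in>grid l. (\<Sum>y\<in>grid l. \<gamma> (x, y)) = p x) \<and>
      (\<forall>y\<in>grid l. (\<Sum>x\<in>grid l. \<gamma> (x, y)) = q y)}"

definition emd_norm :: "nat \<Rightarrow> (point \<Rightarrow> real) \<Rightarrow> real" where
  "emd_norm l v = Inf {emd l p q + 2 * l1_grid l r | p q r.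
      (\<forall>x\<in>grid l. p x \<ge> 0 \<and> q x \<ge> 0 \<and> p x - q x + r x = v x) \<and>
      (\<Sum>x\<in>grid l. p x) = (\<Sum>x\<in>grid l. q x)}"

definition sparse :: "nat \<Rightarrow> nat \<Rightarrow> (point \<Rightarrow> real) \<Rightarrow> bool" where
  "sparse l k v \<longleftrightarrow> card {p\<in>grid l. v p \<noteq> 0} \<le> k"

definition y_noisy :: "nat \<Rightarrow> (point \<Rightarrow> real) \<Rightarrow> (cell \<Rightarrow> real) \<Rightarrow> cell \<Rightarrow> real" where
  "y_noisy l s \<nu> c = (Pi_vec l s c + \<nu> c) / 2 ^ level c"

definition valid_run :: "nat \<Rightarrow> nat \<Rightarrow> (cell \<Rightarrow> real) \<Rightarrow> (nat \<Rightarrow> cell set) \<Rightarrow> bool" where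
  "valid_run l w y S \<longleftrightarrow> S 0 = {root} \<and>
     (\<forall>i\<in>{1..l}. let T = {c'\<in>cells i. \<exists>c\<in>S (i - 1). is_child c' c} in
        S i \<subseteq> T \<and> card (S i) = min w (card T) \<and>
        (\<forall>c\<in>S i. \<forall>c'\<in>T - S i. y c' \<le> y c))"

end

theory Submission
  imports Defs
begin


definition key :: "nat \<Rightarrow> nat \<Rightarrow> point \<Rightarrow> cell" where
  "key l i p = (i, fst p div 2^(l-i), snd p div 2^(l-i))"

lemma finite_grid[simp]: "finite (grid l)"
  by (simp add: grid_def)

lemma finite_cells[simp]: "finite (cells i)"
proof -
  have "cells i = (\<lambda>(a,b). (i,a,b)) ` ({..<2^i} \<times> {..<2^i})"
    by (auto simp: cells_def image_iff)
  then show ?thesis by simp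
qed

lemma finite_all_cells[simp]: "finite (all_cells l)"
  by (simp add: all_cells_def)

lemma level_cells: "c \<in> cells i \<Longrightarrow> level c = i"
  by (auto simp: cells_def level_def)

lemma cells_disj: "i \<noteq> j \<Longrightarrow> cells i \<inter> cells j = {}"
  by (auto simp: cells_def)

lemma key_cells: "p \<in> grid l \<Longrightarrow> key l i p \<in> cells i"
proof -
  assume p: "p \<in> grid l"
  have "fst p div 2^(l-i) < 2^i" "snd p div 2^(l-i) < 2^i" if "i \<le> l"
  proof -
    have e: "(2::nat)^l = 2^i * 2^(l-i)" using that by (simp flip: power_add)
    show "fst p div 2^(l-i) < 2^i" using p e by (auto simp: grid_def less_mult_imp_div_less)
    show "snd p div 2^(l-i) < 2^i" using p e by (auto simp: grid_def less_mult_imp_div_less)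
  qed
  moreover have "fst p div 2^(l-i) < 2^i" "snd p div 2^(l-i) < 2^i" if "\<not> i \<le> l"
  proof -
    have lt: "(2::nat)^l < 2^i" using that by simp
    have "fst p < 2^l" "snd p < 2^l" using p by (auto simp: grid_def)
    then show "fst p div 2^(l-i) < 2^i" "snd p div 2^(l-i) < 2^i" using lt that
      by (simp_all, linarith+)
  qed
  ultimately show ?thesis by (cases "i \<le> l"; cases p) (auto simp: key_def cells_def)
qed

lemma in_cell_key: "c \<in> cells i \<Longrightarrow> in_cell l c p \<longleftrightarrow> key l i p = c"
  by (auto simp: cells_def in_cell_def key_def)

lemma Pi_key: "c \<in> cells i \<Longrightarrow> Pi_vec l s c = (\<Sum>p\<in>{p\<in>grid l. key l i p = c}. s p)"
  unfolding Pi_vec_def by (simp add: in_cell_key sum.inter_filter)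

lemma Pi_group:
  assumes "C \<subseteq> cells i"
  shows "(\<Sum>c\<in>C. Pi_vec l s c) = (\<Sum>p\<in>{p\<in>grid l. key l i p \<in> C}. s p)"
proof -
  have fC: "finite C" using assms finite_cells finite_subset by blast
  have "(\<Sum>c\<in>C. Pi_vec l s c) = (\<Sum>c\<in>C. \<Sum>p\<in>{p. p\<in>{p\<in>grid l. key l i p \<in> C} \<and> key l i p = c}. s p)"
    apply (rule sum.cong[OF refl])
    using assms by (subst Pi_key[of _ i]) (auto intro!: sum.cong)
  also have "\<dots> = (\<Sum>p\<in>{p\<in>grid l. key l i p \<in> C}. s p)"
    by (rule sum.group) (auto simp: fC)
  finally show ?thesis .
qed

lemma Pi_nonneg: "(\<forall>p\<in>grid l. s p \<ge> 0) \<Longrightarrow> Pi_vec l s c \<ge> 0"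
  unfolding Pi_vec_def by (auto intro: sum_nonneg)

lemma parent_key:
  assumes "1 \<le> i" "i \<le> l"
  shows "parent (key l i p) = key l (i-1) p"
proof -
  obtain j where j: "i = Suc j" using assms by (cases i) auto
  have "l - j = Suc (l - Suc j)" using assms j by arith
  then have e: "(2::nat)^(l - j) = 2^(l - Suc j) * 2" by simp
  show ?thesis using assms unfolding j by (simp add: parent_def key_def e div_mult2_eq)
qed

lemma key0: "p \<in> grid l \<Longrightarrow> key l 0 p = root"
  by (auto simp: key_def root_def grid_def)

lemma children_set:
  assumes "c \<in> cells i" "i < l"
  shows "{c'\<in>all_cells l. is_child c' c} = {c'\<in>cells (Suc i). parent c' = c}"
  using assms by (auto simp: all_cells_def is_child_def level_cells)

lemma Pi_children:
  assumes "c \<in> cells i" "i < l"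
  shows "(\<Sum>c'\<in>{c'\<in>all_cells l. is_child c' c}. Pi_vec l s c') = Pi_vec l s c"
proof -
  have "(\<Sum>c'\<in>{c'\<in>all_cells l. is_child c' c}. Pi_vec l s c')
     = (\<Sum>p\<in>{p\<in>grid l. key l (Suc i) p \<in> {c'\<in>cells (Suc i). parent c' = c}}. s p)"
    unfolding children_set[OF assms] by (rule Pi_group) auto
  also have "{p\<in>grid l. key l (Suc i) p \<in> {c'\<in>cells (Suc i). parent c' = c}} = {p\<in>grid l. key l i p = c}"
    using parent_key[of "Suc i" l] assms key_cells by auto
  finally show ?thesis using Pi_key[OF assms(1)] by simp
qed



lemma coupling_exists:
  fixes p q :: "point \<Rightarrow> real"
  assumes "\<forall>x\<in>grid l. p x \<ge> 0 \<and> q x \<ge> 0" "(\<Sum>x\<in>grid l. p x) = (\<Sum>x\<in>grid l. q x)"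
  shows "\<exists>\<gamma>. (\<forall>z\<in>grid l \<times> grid l. \<gamma> z \<ge> 0) \<and>
      (\<forall>x\<in>grid l. (\<Sum>y\<in>grid l. \<gamma> (x, y)) = p x) \<and>
      (\<forall>y\<in>grid l. (\<Sum>x\<in>grid l. \<gamma> (x, y)) = q y)"
proof -
  define Q where "Q = (\<Sum>x\<in>grid l. q x)"
  define \<gamma> where "\<gamma> = (\<lambda>z. p (fst z) * q (snd z) / Q)"
  show ?thesis
  proof (intro exI[of _ \<gamma>] conjI ballI)
    fix z assume "z \<in> grid l \<times> grid l"
    then show "\<gamma> z \<ge> 0" using assms(1) sum_nonneg[of "grid l" q] unfolding \<gamma>_def Q_def
      by (auto intro!: divide_nonneg_nonneg)
  next
    fix x assume x: "x \<in> grid l"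
    show "(\<Sum>y\<in>grid l. \<gamma> (x, y)) = p x"
    proof (cases "Q = 0")
      case True
      then have "(\<Sum>x\<in>grid l. p x) = 0" using assms(2) Q_def by simp
      then have "p x = 0" using assms(1) x by (subst (asm) sum_nonneg_eq_0_iff) auto
      then show ?thesis by (simp add: \<gamma>_def)
    next
      case False
      have "(\<Sum>y\<in>grid l. \<gamma> (x, y)) = p x * Q / Q"
        unfolding \<gamma>_def Q_def by (simp add: sum_divide_distrib[symmetric] sum_distrib_left)
      then show ?thesis using False by simp
    qed
  next
    fix y assume y: "y \<in> grid l"
    show "(\<Sum>x\<in>grid l. \<gamma> (x, y)) = q y"
    proof (cases "Q = 0")
      case True
      then have "q y = 0" using assms(1) y unfolding Q_def by (subst (asm) sum_nonneg_eq_0_iff) auto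
      then show ?thesis by (simp add: \<gamma>_def)
    next
      case False
      have "(\<Sum>x\<in>grid l. \<gamma> (x, y)) = Q * q y / Q"
        unfolding \<gamma>_def Q_def by (simp add: assms(2) sum_divide_distrib[symmetric] sum_distrib_right[symmetric])
      then show ?thesis using False by simp
    qed
  qed
qed

lemma coupling_lower:
  assumes "\<forall>x\<in>grid l. (\<Sum>y\<in>grid l. \<gamma> (x, y)) = p x"
      "\<forall>y\<in>grid l. (\<Sum>x\<in>grid l. \<gamma> (x, y)) = q y"
      "\<forall>z\<in>grid l \<times> grid l. \<gamma> z \<ge> 0"
      "\<forall>x\<in>grid l. \<forall>y\<in>grid l. f x - f y \<le> grid_dist l x y"
  shows "(\<Sum>x\<in>grid l. f x * (p x - q x)) \<le> (\<Sum>z\<in>grid l \<times> grid l. \<gamma> z * grid_dist l (fst z) (snd z))"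
proof -
  have "(\<Sum>x\<in>grid l. f x * (p x - q x)) = (\<Sum>x\<in>grid l. f x * p x) - (\<Sum>y\<in>grid l. f y * q y)"
    by (simp add: right_diff_distrib sum_subtractf)
  also have "(\<Sum>x\<in>grid l. f x * p x) = (\<Sum>x\<in>grid l. \<Sum>y\<in>grid l. \<gamma> (x, y) * f x)"
  proof (rule sum.cong[OF refl])
    fix x assume "x \<in> grid l"
    then have "p x = (\<Sum>y\<in>grid l. \<gamma> (x, y))" using assms(1) by auto
    then show "f x * p x = (\<Sum>y\<in>grid l. \<gamma> (x, y) * f x)" by (simp add: sum_distrib_left mult.commute)
  qed
  also have "(\<Sum>y\<in>grid l. f y * q y) = (\<Sum>y\<in>grid l. \<Sum>x\<in>grid l. \<gamma> (x, y) * f y)"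
  proof (rule sum.cong[OF refl])
    fix y assume "y \<in> grid l"
    then have "q y = (\<Sum>x\<in>grid l. \<gamma> (x, y))" using assms(2) by auto
    then show "f y * q y = (\<Sum>x\<in>grid l. \<gamma> (x, y) * f y)" by (simp add: sum_distrib_left mult.commute)
  qed
  also have "\<dots> = (\<Sum>x\<in>grid l. \<Sum>y\<in>grid l. \<gamma> (x, y) * f y)"
    by (rule sum.swap)
  also have "(\<Sum>x\<in>grid l. \<Sum>y\<in>grid l. \<gamma> (x, y) * f x) - (\<Sum>x\<in>grid l. \<Sum>y\<in>grid l. \<gamma> (x, y) * f y)
      = (\<Sum>x\<in>grid l. \<Sum>y\<in>grid l. \<gamma> (x, y) * (f x - f y))"
    by (simp add: sum_subtractf right_diff_distrib)
  also have "\<dots> \<le> (\<Sum>x\<in>grid l. \<Sum>y\<in>grid l. \<gamma> (x, y) * grid_dist l x y)"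
    using assms(3,4) by (intro sum_mono mult_left_mono) auto
  also have "\<dots> = (\<Sum>z\<in>grid l \<times> grid l. \<gamma> z * grid_dist l (fst z) (snd z))"
    by (simp add: sum.cartesian_product case_prod_beta)
  finally show ?thesis .
qed

lemma grid_dist_nonneg: "grid_dist l x y \<ge> 0"
  by (simp add: grid_dist_def)

lemma emd_lower:
  assumes "\<forall>x\<in>grid l. p x \<ge> 0 \<and> q x \<ge> 0" "(\<Sum>x\<in>grid l. p x) = (\<Sum>x\<in>grid l. q x)"
      "\<forall>x\<in>grid l. \<forall>y\<in>grid l. f x - f y \<le> grid_dist l x y"
  shows "(\<Sum>x\<in>grid l. f x * (p x - q x)) \<le> emd l p q"
  unfolding emd_def
  apply (rule cInf_greatest)
  using coupling_exists[OF assms(1,2)] apply blast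
  using coupling_lower[OF _ _ _ assms(3)] by blast

lemma emd_upper:
  assumes "\<forall>x\<in>grid l. (\<Sum>y\<in>grid l. \<gamma> (x, y)) = p x"
      "\<forall>y\<in>grid l. (\<Sum>x\<in>grid l. \<gamma> (x, y)) = q y"
      "\<forall>z\<in>grid l \<times> grid l. \<gamma> z \<ge> 0"
  shows "emd l p q \<le> (\<Sum>z\<in>grid l \<times> grid l. \<gamma> z * grid_dist l (fst z) (snd z))"
  unfolding emd_def
  apply (rule cInf_lower)
  using assms apply blast
  unfolding bdd_below_def
  by (rule exI[of _ 0]) (auto intro!: sum_nonneg simp: grid_dist_nonneg)

lemma emd_norm_elem_lower:
  assumes "\<forall>x\<in>grid l. p x \<ge> 0 \<and> q x \<ge> 0 \<and> p x - q x + r x = v x"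
      "(\<Sum>x\<in>grid l. p x) = (\<Sum>x\<in>grid l. q x)"
      "\<forall>x\<in>grid l. \<forall>y\<in>grid l. f x - f y \<le> grid_dist l x y"
      "\<forall>x\<in>grid l. 0 \<le> f x \<and> f x \<le> 2"
  shows "(\<Sum>x\<in>grid l. f x * v x) \<le> emd l p q + 2 * l1_grid l r"
proof -
  have "(\<Sum>x\<in>grid l. f x * v x) = (\<Sum>x\<in>grid l. f x * (p x - q x)) + (\<Sum>x\<in>grid l. f x * r x)"
  proof -
    have "(\<Sum>x\<in>grid l. f x * v x) = (\<Sum>x\<in>grid l. f x * (p x - q x) + f x * r x)"
    proof (rule sum.cong[OF refl])
      fix x assume "x \<in> grid l"
      then have "v x = p x - q x + r x" using assms(1) by auto
      then show "f x * v x = f x * (p x - q x) + f x * r x" by (simp add: distrib_left)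
    qed
    then show ?thesis by (simp add: sum.distrib)
  qed
  also have "(\<Sum>x\<in>grid l. f x * r x) \<le> (\<Sum>x\<in>grid l. 2 * \<bar>r x\<bar>)"
  proof (rule sum_mono)
    fix x assume x: "x \<in> grid l"
    have "f x * r x \<le> f x * \<bar>r x\<bar>" using assms(4) x by (intro mult_left_mono) auto
    also have "\<dots> \<le> 2 * \<bar>r x\<bar>" using assms(4) x by (intro mult_right_mono) auto
    finally show "f x * r x \<le> 2 * \<bar>r x\<bar>" .
  qed
  also have "(\<Sum>x\<in>grid l. 2 * \<bar>r x\<bar>) = 2 * l1_grid l r"
    by (simp add: l1_grid_def sum_distrib_left)
  finally show ?thesis using emd_lower[of l p q f] assms by auto
qed

lemma emd_norm_lower:
  assumes "\<forall>x\<in>grid l. \<forall>y\<in>grid l. f x - f y \<le> grid_dist l x y"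
      "\<forall>x\<in>grid l. 0 \<le> f x \<and> f x \<le> 2"
  shows "(\<Sum>x\<in>grid l. f x * v x) \<le> emd_norm l v"
  unfolding emd_norm_def
  apply (rule cInf_greatest)
  subgoal apply (rule ex_in_conv[THEN iffD1])
    apply (rule exI)
    apply (rule CollectI)
    apply (rule exI[of _ "\<lambda>_. 0"], rule exI[of _ "\<lambda>_. 0"], rule exI[of _ v])
    by auto
  using emd_norm_elem_lower[OF _ _ assms] by blast

lemma emd_norm_upper:
  assumes "\<forall>x\<in>grid l. p x \<ge> 0 \<and> q x \<ge> 0 \<and> p x - q x + r x = v x"
      "(\<Sum>x\<in>grid l. p x) = (\<Sum>x\<in>grid l. q x)"
  shows "emd_norm l v \<le> emd l p q + 2 * l1_grid l r"
  unfolding emd_norm_def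
  apply (rule cInf_lower)
  using assms apply blast
  unfolding bdd_below_def
  apply (rule exI[of _ 0])
  using emd_norm_elem_lower[of l _ _ _ v "\<lambda>_. 0"] by (auto simp: grid_dist_nonneg)



definition rep :: "nat \<Rightarrow> cell \<Rightarrow> point" where
  "rep l c = (case c of (i,a,b) \<Rightarrow> (a*2^(l-i), b*2^(l-i)))"

lemma rep_grid:
  assumes "c \<in> cells i" "i \<le> l" shows "rep l c \<in> grid l"
proof -
  obtain a b where c: "c = (i,a,b)" "a < 2^i" "b < 2^i" using assms by (auto simp: cells_def)
  have e: "(2::nat)^l = 2^i * 2^(l-i)" using assms by (simp flip: power_add)
  have "a * 2^(l-i) < 2^l" "b * 2^(l-i) < 2^l" using c e by auto
  then show ?thesis by (simp add: rep_def c grid_def)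
qed

lemma parent_cells:
  assumes "c \<in> cells i" "1 \<le> i" shows "parent c \<in> cells (i-1)"
proof -
  obtain a b where c: "c = (i,a,b)" "a < 2^i" "b < 2^i" using assms by (auto simp: cells_def)
  obtain j where j: "i = Suc j" using assms by (cases i) auto
  have "a div 2 < 2^j" "b div 2 < 2^j" using c j by (auto simp: less_mult_imp_div_less mult.commute)
  then show ?thesis by (simp add: parent_def c cells_def j)
qed

lemma coord_bound:
  fixes a D :: nat
  shows "\<bar>real (a * D) - real (a div 2 * 2 ^ 1 * D)\<bar> \<le> real D"
proof -
  have "a * D = a div 2 * 2 * D + a mod 2 * D" by (metis div_mult_mod_eq distrib_right)
  then have "real (a * D) - real (a div 2 * 2 ^ 1 * D) = real (a mod 2 * D)" by simp
  moreover have "a mod 2 * D \<le> 1 * D" by (intro mult_right_mono) auto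
  then have "real (a mod 2 * D) \<le> real D" by (simp only: of_nat_le_iff mult_1)
  ultimately show ?thesis by (simp only:)
qed

lemma rep_dist:
  assumes "c \<in> cells i" "1 \<le> i" "i \<le> l"
  shows "grid_dist l (rep l c) (rep l (parent c)) \<le> 2 / 2^i"
proof -
  obtain a b where c: "c = (i,a,b)" using assms by (auto simp: cells_def)
  obtain j where j: "i = Suc j" using assms by (cases i) auto
  define D :: nat where "D = 2^(l-i)"
  have lj: "l - j = Suc (l - i)" using assms j by arith
  have pr: "rep l (parent c) = (a div 2 * 2^1 * D, b div 2 * 2^1 * D)"
    by (simp add: rep_def parent_def c j lj D_def)
  have r: "rep l c = (a * D, b * D)" by (simp add: rep_def c D_def)
  have "grid_dist l (rep l c) (rep l (parent c)) \<le> (real D + real D) / 2^l"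
    unfolding grid_dist_def pr r fst_conv snd_conv
    by (intro divide_right_mono add_mono coord_bound) auto
  also have "(real D + real D) / 2^l = 2 / 2^i"
  proof -
    have "(2::real)^l = 2^i * real D" using assms by (simp add: D_def flip: power_add)
    then show ?thesis by (simp add: D_def)
  qed
  finally show ?thesis .
qed

lemma key_l: "key l l p = (l, fst p, snd p)"
  by (simp add: key_def)

lemma Pi_top:
  assumes "x \<in> grid l" shows "Pi_vec l v (l, fst x, snd x) = v x"
proof -
  have xc: "(l, fst x, snd x) \<in> cells l" using assms by (auto simp: grid_def cells_def)
  have "{p \<in> grid l. key l l p = (l, fst x, snd x)} = {x}" using assms by (auto simp: key_l prod_eq_iff)
  then show ?thesis using Pi_key[OF xc] by simp
qed

lemma rep_top: "c \<in> cells l \<Longrightarrow> rep l c = x \<longleftrightarrow> c = (l, fst x, snd x)"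
  by (auto simp: cells_def rep_def)

lemma cells0: "cells 0 = {root}"
  by (auto simp: cells_def root_def)

lemma all_cells_split: "all_cells l = cells 0 \<union> (\<Union>i\<in>{1..l}. cells i)"
proof -
  have "{..l} = {0} \<union> {1..l}" by auto
  then show ?thesis unfolding all_cells_def by simp
qed

lemma sum_if_conj1:
  assumes "finite A" "b \<in> A"
  shows "(\<Sum>y\<in>A. if P \<and> y = b then m else 0) = (if P then m else (0::real))"
  using assms by (cases P) (simp_all add: sum.delta')

lemma sum_if_conj2:
  assumes "finite A" "b \<in> A"
  shows "(\<Sum>y\<in>A. if y = b \<and> P then m else 0) = (if P then m else (0::real))"
  using assms by (cases P) (simp_all add: sum.delta)

lemma telescope_1n:
  fixes f :: "nat \<Rightarrow> real" and n :: nat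
  shows "(\<Sum>i\<in>{1..n}. (f i - f (i-1))) = f n - (f 0 :: real)"
proof (induction n)
  case 0 then show ?case by simp
next
  case (Suc n)
  have "{1..Suc n} = insert (Suc n) {1..n}" by auto
  then show ?case using Suc by simp
qed

lemma grid_dist_sym: "grid_dist l x y = grid_dist l y x"
  by (simp add: grid_dist_def abs_minus_commute)

lemma sum_E:
  "(\<Sum>c\<in>(\<Union>i\<in>{1..l}. cells i). h c) = (\<Sum>i\<in>{1..l}. \<Sum>c\<in>cells i. h c)"
  apply (rule sum.UNION_disjoint)
    apply simp
   apply simp
  apply (auto simp: cells_def)
  done

lemma rep_root: "rep l root = (0,0)"
  by (simp add: rep_def root_def)

lemma emd_norm_quadtree: "emd_norm l v \<le> 2 * l1_cells l (P_vec l v)"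
proof -
  define E where "E = (\<Union>i\<in>{1..l}. cells i)"
  define M where "M = Pi_vec l v"
  define g where "g = (\<lambda>c z. if 0 \<le> M c then (if z = (rep l c, rep l (parent c)) then M c else 0)
       else (if z = (rep l (parent c), rep l c) then - M c else 0))"
  define \<gamma> where "\<gamma> = (\<lambda>z. \<Sum>c\<in>E. g c z)"
  define p where "p = (\<lambda>x. \<Sum>y\<in>grid l. \<gamma> (x, y))"
  define q where "q = (\<lambda>y. \<Sum>x\<in>grid l. \<gamma> (x, y))"
  define r where "r = (\<lambda>x. v x - p x + q x)"
  define A where "A = (\<lambda>i x. \<Sum>c\<in>cells i. if x = rep l c then M c else 0)"
  have fE: "finite E" by (simp add: E_def)
  have Eg: "rep l c \<in> grid l \<and> rep l (parent c) \<in> grid l" if cE: "c \<in> E" for c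
  proof -
    obtain i where i: "c \<in> cells i" "1 \<le> i" "i \<le> l" using cE unfolding E_def by auto
    show ?thesis using rep_grid[OF i(1,3)] rep_grid[OF parent_cells[OF i(1,2)]] i(3) by auto
  qed
  have g_nonneg: "g c z \<ge> 0" for c z unfolding g_def by (cases "0 \<le> M c") (simp_all only: if_True if_False, auto)
  have \<gamma>_nonneg: "\<gamma> z \<ge> 0" for z unfolding \<gamma>_def by (intro sum_nonneg) (simp add: g_nonneg)
  have p_eq: "p x = (\<Sum>c\<in>E. if 0 \<le> M c then (if x = rep l c then M c else 0)
       else (if x = rep l (parent c) then - M c else 0))" for x
    unfolding p_def \<gamma>_def
    apply (subst sum.swap)
    apply (rule sum.cong[OF refl])
    using Eg by (simp add: g_def sum_if_conj1)
  have q_eq: "q y = (\<Sum>c\<in>E. if 0 \<le> M c then (if y = rep l (parent c) then M c else 0)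
       else (if y = rep l c then - M c else 0))" for y
    unfolding q_def \<gamma>_def
    apply (subst sum.swap)
    apply (rule sum.cong[OF refl])
    using Eg by (simp add: g_def sum_if_conj2)
  have pq: "p x - q x = (\<Sum>c\<in>E. if x = rep l c then M c else 0) - (\<Sum>c\<in>E. if x = rep l (parent c) then M c else 0)" for x
    unfolding p_eq q_eq sum_subtractf[symmetric] by (rule sum.cong) auto
  have par: "(\<Sum>c\<in>cells i. if x = rep l (parent c) then M c else 0) = A (i-1) x"
    if i: "1 \<le> i" "i \<le> l" for i x
  proof -
    have "(\<Sum>c\<in>cells i. if x = rep l (parent c) then M c else 0)
        = (\<Sum>c0\<in>cells (i-1). \<Sum>c\<in>{c. c \<in> cells i \<and> parent c = c0}. if x = rep l (parent c) then M c else 0)"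
      by (rule sum.group[symmetric]) (use parent_cells i in auto)
    also have "\<dots> = A (i-1) x"
      unfolding A_def
    proof (rule sum.cong[OF refl])
      fix c0 assume c0: "c0 \<in> cells (i-1)"
      have "(\<Sum>c\<in>{c. c \<in> cells i \<and> parent c = c0}. if x = rep l (parent c) then M c else 0)
          = (\<Sum>c\<in>{c\<in>cells (Suc (i-1)). parent c = c0}. if x = rep l c0 then M c else 0)"
        using i by (intro sum.cong) auto
      also have "\<dots> = (if x = rep l c0 then (\<Sum>c\<in>{c\<in>cells (Suc (i-1)). parent c = c0}. M c) else 0)"
        by simp
      also have "(\<Sum>c\<in>{c\<in>cells (Suc (i-1)). parent c = c0}. M c) = M c0"
        using Pi_children[OF c0, of l v] children_set[OF c0, of l] i unfolding M_def by simp
      finally show "(\<Sum>c\<in>{c. c \<in> cells i \<and> parent c = c0}. if x = rep l (parent c) then M c else 0)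
          = (if x = rep l c0 then M c0 else 0)" .
    qed
    finally show ?thesis .
  qed
  have pq2: "p x - q x = A l x - A 0 x" for x
  proof -
    have "p x - q x = (\<Sum>i\<in>{1..l}. A i x) - (\<Sum>i\<in>{1..l}. A (i-1) x)"
      unfolding pq E_def sum_E A_def using par by (simp add: A_def)
    also have "\<dots> = (\<Sum>i\<in>{1..l}. A i x - A (i-1) x)" by (simp add: sum_subtractf)
    also have "\<dots> = A l x - A 0 x" by (rule telescope_1n)
    finally show ?thesis .
  qed
  have Al: "A l x = v x" if "x \<in> grid l" for x
  proof -
    have xc: "(l, fst x, snd x) \<in> cells l" using that by (auto simp: grid_def cells_def)
    have "A l x = (\<Sum>c\<in>cells l. if c = (l, fst x, snd x) then M c else 0)"
      unfolding A_def
    proof (rule sum.cong[OF refl])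
      fix c assume "c \<in> cells l"
      then have "(x = rep l c) = (c = (l, fst x, snd x))" using rep_top[of c l x] by auto
      then show "(if x = rep l c then M c else 0) = (if c = (l, fst x, snd x) then M c else 0)" by simp
    qed
    also have "\<dots> = M (l, fst x, snd x)" using xc by (simp add: sum.delta')
    finally show ?thesis using Pi_top[OF that] M_def by simp
  qed
  have A0: "A 0 x = (if x = (0,0) then M root else 0)" for x
    by (auto simp: A_def cells0 rep_root)
  have r_eq: "r x = (if x = (0,0) then M root else 0)" if "x \<in> grid l" for x
    using pq2[of x] Al[OF that] A0[of x] unfolding r_def by simp
  have g00: "(0,0) \<in> grid l" by (simp add: grid_def)
  have l1r: "l1_grid l r = \<bar>M root\<bar>"
  proof -
    have "l1_grid l r = (\<Sum>x\<in>grid l. if x = (0,0) then \<bar>M root\<bar> else 0)"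
      unfolding l1_grid_def by (intro sum.cong) (auto simp: r_eq)
    then show ?thesis using g00 by (simp add: sum.delta')
  qed
  have cost: "(\<Sum>z\<in>grid l \<times> grid l. \<gamma> z * grid_dist l (fst z) (snd z))
      = (\<Sum>c\<in>E. \<bar>M c\<bar> * grid_dist l (rep l c) (rep l (parent c)))"
  proof -
    have "(\<Sum>z\<in>grid l \<times> grid l. \<gamma> z * grid_dist l (fst z) (snd z))
        = (\<Sum>c\<in>E. \<Sum>z\<in>grid l \<times> grid l. g c z * grid_dist l (fst z) (snd z))"
      unfolding \<gamma>_def sum_distrib_right by (rule sum.swap)
    also have "\<dots> = (\<Sum>c\<in>E. \<bar>M c\<bar> * grid_dist l (rep l c) (rep l (parent c)))"
    proof (rule sum.cong[OF refl])
      fix c assume c: "c \<in> E"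
      show "(\<Sum>z\<in>grid l \<times> grid l. g c z * grid_dist l (fst z) (snd z)) =
          \<bar>M c\<bar> * grid_dist l (rep l c) (rep l (parent c))"
      proof (cases "0 \<le> M c")
        case True
        have "(\<Sum>z\<in>grid l \<times> grid l. g c z * grid_dist l (fst z) (snd z))
            = (\<Sum>z\<in>grid l \<times> grid l. if z = (rep l c, rep l (parent c)) then M c * grid_dist l (fst z) (snd z) else 0)"
          using True by (intro sum.cong) (auto simp: g_def)
        also have "\<dots> = M c * grid_dist l (rep l c) (rep l (parent c))"
          using Eg[OF c] by (simp add: sum.delta')
        finally show ?thesis using True by simp
      next
        case False
        have "(\<Sum>z\<in>grid l \<times> grid l. g c z * grid_dist l (fst z) (snd z))
            = (\<Sum>z\<in>grid l \<times> grid l. if z = (rep l (parent c), rep l c) then - M c * grid_dist l (fst z) (snd z) else 0)"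
          using False by (intro sum.cong) (auto simp: g_def)
        also have "\<dots> = - M c * grid_dist l (rep l (parent c)) (rep l c)"
          using Eg[OF c] by (simp add: sum.delta')
        finally show ?thesis using False by (simp add: grid_dist_sym)
      qed
    qed
    finally show ?thesis .
  qed
  have cost_le: "(\<Sum>c\<in>E. \<bar>M c\<bar> * grid_dist l (rep l c) (rep l (parent c))) \<le> 2 * (\<Sum>c\<in>E. \<bar>P_vec l v c\<bar>)"
  proof -
    have "(\<Sum>c\<in>E. \<bar>M c\<bar> * grid_dist l (rep l c) (rep l (parent c))) \<le> (\<Sum>c\<in>E. 2 * \<bar>P_vec l v c\<bar>)"
    proof (rule sum_mono)
      fix c assume c: "c \<in> E"
      obtain i where i: "c \<in> cells i" "1 \<le> i" "i \<le> l" using c unfolding E_def by auto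
      have "\<bar>M c\<bar> * grid_dist l (rep l c) (rep l (parent c)) \<le> \<bar>M c\<bar> * (2 / 2^i)"
        by (intro mult_left_mono rep_dist[OF i]) auto
      also have "\<dots> = 2 * \<bar>P_vec l v c\<bar>"
        by (simp add: P_vec_def M_def level_cells[OF i(1)] abs_divide)
      finally show "\<bar>M c\<bar> * grid_dist l (rep l c) (rep l (parent c)) \<le> 2 * \<bar>P_vec l v c\<bar>" .
    qed
    then show ?thesis by (simp add: sum_distrib_left)
  qed
  have l1split: "l1_cells l (P_vec l v) = \<bar>M root\<bar> + (\<Sum>c\<in>E. \<bar>P_vec l v c\<bar>)"
  proof -
    have "l1_cells l (P_vec l v) = (\<Sum>c\<in>cells 0 \<union> E. \<bar>P_vec l v c\<bar>)"
      unfolding l1_cells_def all_cells_split E_def ..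
    also have "\<dots> = (\<Sum>c\<in>cells 0. \<bar>P_vec l v c\<bar>) + (\<Sum>c\<in>E. \<bar>P_vec l v c\<bar>)"
      by (rule sum.union_disjoint) (simp_all add: E_def, auto simp: cells_def)
    also have "(\<Sum>c\<in>cells 0. \<bar>P_vec l v c\<bar>) = \<bar>M root\<bar>"
      by (simp add: cells0 P_vec_def M_def level_def root_def)
    finally show ?thesis .
  qed
  have sumpq: "(\<Sum>x\<in>grid l. p x) = (\<Sum>x\<in>grid l. q x)"
    unfolding p_def q_def by (rule sum.swap)
  have cond: "\<forall>x\<in>grid l. p x \<ge> 0 \<and> q x \<ge> 0 \<and> p x - q x + r x = v x"
    by (auto simp: r_def p_def q_def intro!: sum_nonneg \<gamma>_nonneg)
  have "emd_norm l v \<le> emd l p q + 2 * l1_grid l r"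
    by (rule emd_norm_upper[OF cond sumpq])
  also have "emd l p q \<le> (\<Sum>z\<in>grid l \<times> grid l. \<gamma> z * grid_dist l (fst z) (snd z))"
    by (rule emd_upper) (auto simp: p_def q_def \<gamma>_nonneg)
  finally show ?thesis using cost cost_le l1r l1split by linarith
qed



lemma geom_sum:
  fixes t :: real
  shows "(\<Sum>i\<in>{i. i \<le> n \<and> 1/2^i < t}. (1::real)/2^i) \<le> max 0 (2*t - 1/2^n)"
proof (induction n)
  case 0
  show ?case
  proof (cases "1 < t")
    case True
    then have e: "{i::nat. i \<le> 0 \<and> 1/2^i < t} = {0}" by auto
    show ?thesis unfolding e using True by simp
  next
    case False
    then have e: "{i::nat. i \<le> 0 \<and> 1/2^i < t} = {}" by auto
    show ?thesis unfolding e by simp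
  qed
next
  case (Suc n)
  show ?case
  proof (cases "1/2^Suc n < t")
    case True
    have "{i. i \<le> Suc n \<and> 1/2^i < t} = insert (Suc n) {i. i \<le> n \<and> 1/2^i < t}"
      using True by (auto simp: le_Suc_eq)
    then have "(\<Sum>i\<in>{i. i \<le> Suc n \<and> 1/2^i < t}. (1::real)/2^i)
        = 1/2^Suc n + (\<Sum>i\<in>{i. i \<le> n \<and> 1/2^i < t}. (1::real)/2^i)"
      by simp
    also have "\<dots> \<le> 1/2^Suc n + max 0 (2*t - 1/2^n)" using Suc by simp
    also have "\<dots> \<le> max 0 (2*t - 1/2^Suc n)"
      using True by (simp add: max_def field_simps)
    finally show ?thesis .
  next
    case False
    have e: "{i. i \<le> Suc n \<and> 1/2^i < t} = {}"
    proof -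
      have "1/2^Suc n \<le> (1::real)/2^i" if "i \<le> Suc n" for i
        using that by (intro divide_left_mono power_increasing) auto
      then show ?thesis using False by force
    qed
    show ?thesis unfolding e by simp
  qed
qed

lemma geom_sum2:
  fixes t :: real
  assumes "t \<ge> 0"
  shows "(\<Sum>i\<in>{i. i \<le> n \<and> 1/2^i < t}. (1::real)/2^i) \<le> 2 * t"
proof -
  have h: "(\<Sum>i\<in>{i. i \<le> n \<and> 1/2^i < t}. (1::real)/2^i) \<le> max 0 (2*t - 1/2^n)" by (rule geom_sum)
  have "max 0 (2*t - 1/2^n) \<le> 2*t" using assms by (simp add: max_def)
  then show ?thesis using h by linarith
qed

lemma div_far:
  fixes x y D K :: nat
  assumes "D > 0" "x div D \<ge> y div D + K + 1"
  shows "real K * real D < real x - real y"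
proof -
  have a: "D * (x div D) \<le> x" by (simp add: times_div_less_eq_dividend)
  have b: "y < D * (y div D) + D" using assms(1)
    by (metis add.commute div_mult_mod_eq mod_less_divisor mult.commute nat_add_left_cancel_less)
  have c: "D * (y div D + K + 1) \<le> D * (x div D)" using assms(2) by (rule mult_le_mono2)
  have d: "D * (y div D + K + 1) = D * (y div D) + D * K + D" by (simp add: algebra_simps)
  have "D * K + y < x" using a b c d by linarith
  then have "real (D * K + y) < real x" by (simp only: of_nat_less_iff)
  then show ?thesis by (simp add: algebra_simps)
qed

lemma div_far_abs:
  fixes x y D K :: nat
  assumes "D > 0" "\<not> \<bar>int (x div D) - int (y div D)\<bar> \<le> int K"
  shows "real K * real D < \<bar>real x - real y\<bar>"
proof (cases "x div D \<ge> y div D")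
  case True
  then have h: "x div D \<ge> y div D + K + 1" using assms(2) by linarith
  have "real K * real D < real x - real y" by (rule div_far[OF assms(1) h])
  then show ?thesis using abs_ge_self[of "real x - real y"] by linarith
next
  case False
  then have h: "y div D \<ge> x div D + K + 1" using assms(2) by linarith
  have "real K * real D < real y - real x" by (rule div_far[OF assms(1) h])
  then show ?thesis using abs_ge_minus_self[of "real x - real y"] by linarith
qed

lemma half_close:
  fixes a u :: nat
  shows "\<bar>int (a div 2) - int (u div 2)\<bar> \<le> \<bar>int a - int u\<bar>"
  by linarith



definition near :: "nat \<Rightarrow> nat \<Rightarrow> cell \<Rightarrow> point \<Rightarrow> bool" where
  "near l K c z \<longleftrightarrow> \<bar>int (fst (snd c)) - int (fst z div 2^(l - fst c))\<bar> \<le> int K \<and>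
     \<bar>int (snd (snd c)) - int (snd z div 2^(l - fst c))\<bar> \<le> int K"

definition Tg :: "nat \<Rightarrow> nat \<Rightarrow> point set \<Rightarrow> cell set" where
  "Tg l K Z = {c \<in> all_cells l. \<exists>z\<in>Z. near l K c z}"

lemma box_sub: "{a::nat. \<bar>int a - int u\<bar> \<le> int K} \<subseteq> {u-K..u+K}"
proof
  fix a assume "a \<in> {a::nat. \<bar>int a - int u\<bar> \<le> int K}"
  then have "\<bar>int a - int u\<bar> \<le> int K" by simp
  then have "u - K \<le> a" "a \<le> u + K" by linarith+
  then show "a \<in> {u-K..u+K}" by simp
qed

lemma card_box: "card {a::nat. \<bar>int a - int u\<bar> \<le> int K} \<le> 2*K+1"
proof -
  have "card {a::nat. \<bar>int a - int u\<bar> \<le> int K} \<le> card {u-K..u+K}"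
    by (rule card_mono[OF _ box_sub]) simp
  also have "card {u-K..u+K} = Suc (u+K) - (u-K)" by (rule card_atLeastAtMost)
  also have "\<dots> \<le> 2*K+1" by linarith
  finally show ?thesis .
qed

lemma finite_box: "finite {a::nat. \<bar>int a - int u\<bar> \<le> int K}"
  using box_sub finite_subset by blast

lemma Tg_card:
  assumes "finite Z"
  shows "card (Tg l K Z \<inter> cells i) \<le> card Z * (2*K+1)^2"
proof -
  define box where "box = (\<lambda>u. {a::nat. \<bar>int a - int u\<bar> \<le> int K})"
  define D where "D = (2::nat)^(l-i)"
  define F where "F = (\<lambda>z. (\<lambda>(a,b). (i,a,b)) ` (box (fst z div D) \<times> box (snd z div D)))"
  have sub: "Tg l K Z \<inter> cells i \<subseteq> (\<Union>z\<in>Z. F z)"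
  proof
    fix c assume c: "c \<in> Tg l K Z \<inter> cells i"
    then obtain a b where ab: "c = (i,a,b)" unfolding cells_def by blast
    obtain z where z: "z \<in> Z" "near l K c z" using c unfolding Tg_def by blast
    have zz: "\<bar>int a - int (fst z div D)\<bar> \<le> int K" "\<bar>int b - int (snd z div D)\<bar> \<le> int K"
      using z(2) unfolding near_def ab D_def by simp_all
    have "(a,b) \<in> box (fst z div D) \<times> box (snd z div D)"
      using zz unfolding box_def by simp
    then have "c \<in> F z" unfolding F_def ab by (rule rev_image_eqI) simp
    then show "c \<in> (\<Union>z\<in>Z. F z)" using z(1) by (rule UN_I[rotated])
  qed
  have fF: "finite (F z)" for z by (simp add: F_def box_def finite_box)
  have cF: "card (F z) \<le> (2*K+1)^2" for z
  proof -
    have "card (F z) \<le> card (box (fst z div D) \<times> box (snd z div D))"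
      unfolding F_def by (rule card_image_le) (simp add: box_def finite_box)
    also have "\<dots> = card (box (fst z div D)) * card (box (snd z div D))" by (rule card_cartesian_product)
    also have "\<dots> \<le> (2*K+1) * (2*K+1)" unfolding box_def by (intro mult_le_mono card_box)
    finally show ?thesis by (simp add: power2_eq_square)
  qed
  have "card (Tg l K Z \<inter> cells i) \<le> card (\<Union>z\<in>Z. F z)"
    by (rule card_mono[OF _ sub]) (use assms fF in blast)
  also have "\<dots> \<le> (\<Sum>z\<in>Z. card (F z))" by (rule card_UN_le[OF assms])
  also have "\<dots> \<le> (\<Sum>z\<in>Z. (2*K+1)^2)" by (rule sum_mono) (rule cF)
  also have "\<dots> = card Z * (2*K+1)^2" by simp
  finally show ?thesis .
qed

lemma Tg_tree:
  assumes "finite Z" "(0,0) \<in> Z" "card Z * (2*K+1)^2 \<le> w"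
  shows "Tg l K Z \<in> trees l w"
proof -
  have root: "root \<in> Tg l K Z"
  proof -
    have "root \<in> all_cells l" unfolding all_cells_def using cells0 by blast
    moreover have "near l K root (0,0)" by (simp add: near_def root_def)
    ultimately show ?thesis using assms(2) unfolding Tg_def by blast
  qed
  have par: "parent c \<in> Tg l K Z" if c: "c \<in> Tg l K Z" "level c > 0" for c
  proof -
    obtain i a b where ab: "c = (i,a,b)" by (cases c) auto
    have ci: "c \<in> cells i" "i \<le> l" using c ab by (auto simp: Tg_def all_cells_def cells_def)
    have i1: "1 \<le> i" using c(2) ab by (simp add: level_def)
    have pc: "parent c \<in> all_cells l" using parent_cells[OF ci(1) i1] ci(2) by (auto simp: all_cells_def)
    obtain z where z: "z \<in> Z" "near l K c z" using c unfolding Tg_def by blast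
    obtain j where j: "i = Suc j" using i1 by (cases i) auto
    have lj: "l - j = Suc (l - i)" using ci(2) j by arith
    have e: "u div 2^(l - j) = u div 2^(l-i) div 2" for u :: nat
      by (simp only: lj power_Suc2 div_mult2_eq)
    have "near l K (parent c) z"
      using z(2) half_close[of a "fst z div 2^(l-i)"] half_close[of b "snd z div 2^(l-i)"]
      by (simp add: near_def parent_def ab j e)
    then show ?thesis using pc z(1) unfolding Tg_def by blast
  qed
  have card: "card (Tg l K Z \<inter> cells i) \<le> w" for i
    using Tg_card[OF assms(1), of l K i] assms(3) by linarith
  have sub: "Tg l K Z \<subseteq> all_cells l" unfolding Tg_def by blast
  show ?thesis unfolding trees_def
    apply (rule CollectI)
    apply (intro conjI)
    subgoal by (rule sub)
    subgoal by (rule root)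
    subgoal using par by blast
    subgoal using card by blast
    done
qed

lemma far_dist:
  assumes p: "p \<in> grid l" and i: "i \<le> l" and nk: "key l i p \<notin> Tg l K Z" and z: "z \<in> Z"
  shows "real K / 2^i < grid_dist l p z"
proof -
  define D :: nat where "D = 2^(l-i)"
  have kc: "key l i p \<in> all_cells l" using key_cells[OF p] i by (auto simp: all_cells_def)
  have nn: "\<not> near l K (key l i p) z" using nk kc z unfolding Tg_def by blast
  have D0: "D > 0" by (simp add: D_def)
  have "\<not> \<bar>int (fst p div D) - int (fst z div D)\<bar> \<le> int K \<or> \<not> \<bar>int (snd p div D) - int (snd z div D)\<bar> \<le> int K"
    using nn by (auto simp: near_def key_def D_def)
  then have "real K * real D < \<bar>real (fst p) - real (fst z)\<bar> + \<bar>real (snd p) - real (snd z)\<bar>"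
    using div_far_abs[OF D0, of "fst p" "fst z" K] div_far_abs[OF D0, of "snd p" "snd z" K] by force
  then have "real K * real D / 2^l < grid_dist l p z"
    unfolding grid_dist_def by (intro divide_strict_right_mono) auto
  moreover have "real K * real D / 2^l = real K / 2^i"
  proof -
    have "(2::real)^l = 2^i * real D" using i by (simp add: D_def flip: power_add)
    then show ?thesis using D0 by simp
  qed
  ultimately show ?thesis by simp
qed

definition fZ :: "nat \<Rightarrow> point set \<Rightarrow> point \<Rightarrow> real" where
  "fZ l Z p = Min (grid_dist l p ` Z)"

lemma grid_dist_tri: "grid_dist l x z \<le> grid_dist l x y + grid_dist l y z"
  unfolding grid_dist_def by (simp add: add_divide_distrib[symmetric] divide_right_mono)



lemma fZ_nonneg: "finite Z \<Longrightarrow> Z \<noteq> {} \<Longrightarrow> fZ l Z p \<ge> 0"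
  unfolding fZ_def by (simp add: grid_dist_nonneg)

lemma fZ_zero: "finite Z \<Longrightarrow> p \<in> Z \<Longrightarrow> fZ l Z p = 0"
proof -
  assume a: "finite Z" "p \<in> Z"
  have "fZ l Z p \<le> grid_dist l p p" unfolding fZ_def using a by (intro Min_le) auto
  moreover have "grid_dist l p p = 0" by (simp add: grid_dist_def)
  moreover have "fZ l Z p \<ge> 0" using fZ_nonneg a by blast
  ultimately show ?thesis by linarith
qed

lemma fZ_le2:
  assumes "finite Z" "(0,0) \<in> Z" "p \<in> grid l" shows "fZ l Z p \<le> 2"
proof -
  have "fZ l Z p \<le> grid_dist l p (0,0)" unfolding fZ_def using assms by (intro Min_le) auto
  also have "grid_dist l p (0,0) = (real (fst p) + real (snd p)) / 2^l" by (simp add: grid_dist_def)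
  also have "\<dots> \<le> (2^l + 2^l) / 2^l"
  proof -
    have "fst p < 2^l" "snd p < 2^l" using assms(3) by (auto simp: grid_def)
    then have "real (fst p) \<le> 2^l" "real (snd p) \<le> 2^l"
      by (metis less_imp_le of_nat_le_iff of_nat_numeral of_nat_power)+
    then have "real (fst p) + real (snd p) \<le> 2^l + 2^l" by linarith
    then show ?thesis by (rule divide_right_mono) simp
  qed
  also have "\<dots> = 2" by simp
  finally show ?thesis .
qed

lemma fZ_lip:
  assumes "finite Z" "Z \<noteq> {}" shows "fZ l Z x - fZ l Z y \<le> grid_dist l x y"
proof -
  have "Min (grid_dist l y ` Z) \<in> grid_dist l y ` Z" using assms by (intro Min_in) auto
  then obtain z where z: "z \<in> Z" "fZ l Z y = grid_dist l y z"
    unfolding fZ_def by blast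
  have "fZ l Z x \<le> grid_dist l x z" unfolding fZ_def using assms z by (intro Min_le) auto
  also have "\<dots> \<le> grid_dist l x y + grid_dist l y z" by (rule grid_dist_tri)
  finally show ?thesis using z by linarith
qed

lemma fZ_far:
  assumes "finite Z" "Z \<noteq> {}" "p \<in> grid l" "i \<le> l" "key l i p \<notin> Tg l K Z"
  shows "real K / 2^i < fZ l Z p"
  unfolding fZ_def using assms far_dist[OF assms(3,4,5)] by (simp add: Min_gr_iff)

lemma lower_sparse:
  assumes "finite Z" "(0,0) \<in> Z" "{p\<in>grid l. s' p \<noteq> 0} \<subseteq> Z"
  shows "(\<Sum>p\<in>grid l. fZ l Z p * s p) \<le> emd_norm l (\<lambda>p. s p - s' p)"
proof -
  have ne: "Z \<noteq> {}" using assms(2) by blast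
  have "(\<Sum>p\<in>grid l. fZ l Z p * (s p - s' p)) \<le> emd_norm l (\<lambda>p. s p - s' p)"
    by (rule emd_norm_lower) (use fZ_lip[OF assms(1) ne] fZ_nonneg[OF assms(1) ne] fZ_le2[OF assms(1,2)] in auto)
  moreover have "(\<Sum>p\<in>grid l. fZ l Z p * (s p - s' p)) = (\<Sum>p\<in>grid l. fZ l Z p * s p)"
  proof (rule sum.cong[OF refl])
    fix p assume p: "p \<in> grid l"
    show "fZ l Z p * (s p - s' p) = fZ l Z p * s p"
    proof (cases "s' p = 0")
      case False
      then have "p \<in> Z" using assms(3) p by blast
      then show ?thesis using fZ_zero[OF assms(1)] by simp
    qed simp
  qed
  ultimately show ?thesis by simp
qed

lemma tail_bound:
  assumes s: "\<forall>p\<in>grid l. s p \<ge> 0" and K: "K \<ge> 1" and Z: "finite Z" "(0,0) \<in> Z"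
  shows "(\<Sum>c\<in>all_cells l - Tg l K Z. P_vec l s c) \<le> (2 / real K) * (\<Sum>p\<in>grid l. fZ l Z p * s p)"
proof -
  define T where "T = Tg l K Z"
  have ne: "Z \<noteq> {}" using Z by blast
  have "all_cells l - T = (\<Union>i\<in>{..l}. cells i - T)" unfolding all_cells_def by blast
  then have "(\<Sum>c\<in>all_cells l - T. P_vec l s c) = (\<Sum>i\<in>{..l}. \<Sum>c\<in>cells i - T. P_vec l s c)"
    by (simp only:) (rule sum.UNION_disjoint, simp, simp, auto simp: cells_def)
  also have "\<dots> = (\<Sum>i\<in>{..l}. \<Sum>p\<in>grid l. if key l i p \<notin> T then s p / 2^i else 0)"
  proof (rule sum.cong[OF refl])
    fix i assume "i \<in> {..l}"
    have "(\<Sum>c\<in>cells i - T. P_vec l s c) = (\<Sum>c\<in>cells i - T. Pi_vec l s c / 2^i)"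
      by (rule sum.cong) (auto simp: P_vec_def level_cells)
    also have "\<dots> = (\<Sum>c\<in>cells i - T. Pi_vec l s c) / 2^i"
      by (simp add: sum_divide_distrib)
    also have "(\<Sum>c\<in>cells i - T. Pi_vec l s c) = (\<Sum>p\<in>{p\<in>grid l. key l i p \<in> cells i - T}. s p)"
      by (rule Pi_group) auto
    also have "\<dots> = (\<Sum>p\<in>grid l. if key l i p \<notin> T then s p else 0)"
      by (simp add: sum.inter_filter key_cells)
    also have "(\<Sum>p\<in>grid l. if key l i p \<notin> T then s p else 0) / 2^i = (\<Sum>p\<in>grid l. if key l i p \<notin> T then s p / 2^i else 0)"
      unfolding sum_divide_distrib by (rule sum.cong) auto
    finally show "(\<Sum>c\<in>cells i - T. P_vec l s c) = (\<Sum>p\<in>grid l. if key l i p \<notin> T then s p / 2^i else 0)" .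
  qed
  also have "\<dots> = (\<Sum>p\<in>grid l. \<Sum>i\<in>{..l}. if key l i p \<notin> T then s p / 2^i else 0)"
    by (rule sum.swap)
  also have "\<dots> \<le> (\<Sum>p\<in>grid l. s p * (2 * (fZ l Z p / real K)))"
  proof (rule sum_mono)
    fix p assume p: "p \<in> grid l"
    have "(\<Sum>i\<in>{..l}. if key l i p \<notin> T then s p / 2^i else 0)
        = s p * (\<Sum>i\<in>{i. i \<le> l \<and> key l i p \<notin> T}. 1 / 2^i)"
      by (simp add: sum_distrib_left sum.inter_filter[symmetric] atMost_def)
    also have "(\<Sum>i\<in>{i. i \<le> l \<and> key l i p \<notin> T}. (1::real) / 2^i)
        \<le> (\<Sum>i\<in>{i. i \<le> l \<and> 1/2^i < fZ l Z p / real K}. 1 / 2^i)"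
    proof (rule sum_mono2)
      show "finite {i. i \<le> l \<and> 1/2^i < fZ l Z p / real K}" by simp
      show "{i. i \<le> l \<and> key l i p \<notin> T} \<subseteq> {i. i \<le> l \<and> 1/2^i < fZ l Z p / real K}"
      proof
        fix i assume "i \<in> {i. i \<le> l \<and> key l i p \<notin> T}"
        then have i: "i \<le> l" "key l i p \<notin> Tg l K Z" by (auto simp: T_def)
        have "real K / 2^i < fZ l Z p" by (rule fZ_far[OF Z(1) ne p i])
        then have "1 / 2^i < fZ l Z p / real K" using K by (simp add: field_simps)
        then show "i \<in> {i. i \<le> l \<and> 1/2^i < fZ l Z p / real K}" using i by simp
      qed
    qed simp
    also have "\<dots> \<le> 2 * (fZ l Z p / real K)"
      by (rule geom_sum2) (use fZ_nonneg[OF Z(1) ne] in simp)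
    finally show "(\<Sum>i\<in>{..l}. if key l i p \<notin> T then s p / 2^i else 0) \<le> s p * (2 * (fZ l Z p / real K))"
      using s p by (simp add: mult_left_mono)
  qed
  also have "\<dots> = (2 / real K) * (\<Sum>p\<in>grid l. fZ l Z p * s p)"
    by (simp add: sum_distrib_left algebra_simps)
  finally show ?thesis unfolding T_def .
qed



lemma level_bound:
  fixes Ti Si Ts :: "cell set" and y Ps \<nu> :: "cell \<Rightarrow> real" and i w :: nat
  assumes Ti: "Ti \<subseteq> cells i" and SiTi: "Si \<subseteq> Ti" and card: "card Si = min w (card Ti)"
    and greedy: "\<forall>c\<in>Si. \<forall>c'\<in>Ti - Si. y c' \<le> y c"
    and Tsc: "card (Ts \<inter> cells i) \<le> w"
    and yeq: "\<forall>c\<in>cells i. y c = Ps c + \<nu> c / 2^i"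
    and Psnn: "\<forall>c\<in>cells i. Ps c \<ge> 0"
  shows "(\<Sum>c\<in>Ti - Si. Ps c) \<le> 2 * (\<Sum>c\<in>cells i - Ts. Ps c)
           + (1/2^i) * (\<Sum>c\<in>((Ts \<inter> cells i) - Si) \<union> Si. \<bar>\<nu> c\<bar>)"
proof -
  define M where "M = (Ti - Si) \<inter> Ts"
  define R where "R = (Ti - Si) - Ts"
  define B where "B = Si - Ts"
  define V where "V = (Ts \<inter> cells i) - Si"
  have fT: "finite Ti" by (rule finite_subset[OF Ti]) simp
  have fS: "finite Si" by (rule finite_subset[OF SiTi fT])
  have fM: "finite M" "finite R" "finite B"
    unfolding M_def R_def B_def using fT fS by simp_all
  have split: "(\<Sum>c\<in>Ti - Si. Ps c) = (\<Sum>c\<in>M. Ps c) + (\<Sum>c\<in>R. Ps c)"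
  proof -
    have e: "Ti - Si = M \<union> R" unfolding M_def R_def by blast
    have d: "M \<inter> R = {}" unfolding M_def R_def by blast
    have "(\<Sum>c\<in>Ti - Si. Ps c) = (\<Sum>c\<in>M \<union> R. Ps c)" by (simp only: e)
    also have "\<dots> = (\<Sum>c\<in>M. Ps c) + (\<Sum>c\<in>R. Ps c)" by (rule sum.union_disjoint[OF fM(1,2) d])
    finally show ?thesis .
  qed
  have tailR: "(\<Sum>c\<in>R. Ps c) \<le> (\<Sum>c\<in>cells i - Ts. Ps c)"
    by (rule sum_mono2) (use Ti Psnn in \<open>auto simp: R_def\<close>)
  have tailB: "(\<Sum>c\<in>B. Ps c) \<le> (\<Sum>c\<in>cells i - Ts. Ps c)"
    by (rule sum_mono2) (use Ti SiTi Psnn in \<open>auto simp: B_def\<close>)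
  have noise: "(\<Sum>c\<in>M. \<bar>\<nu> c\<bar>) + (\<Sum>c\<in>B. \<bar>\<nu> c\<bar>) \<le> (\<Sum>c\<in>V \<union> Si. \<bar>\<nu> c\<bar>)"
  proof -
    have "(\<Sum>c\<in>M. \<bar>\<nu> c\<bar>) + (\<Sum>c\<in>B. \<bar>\<nu> c\<bar>) = (\<Sum>c\<in>M \<union> B. \<bar>\<nu> c\<bar>)"
      using fM by (intro sum.union_disjoint[symmetric]) (auto simp: M_def B_def)
    also have "\<dots> \<le> (\<Sum>c\<in>V \<union> Si. \<bar>\<nu> c\<bar>)"
      by (rule sum_mono2) (use fS Ti in \<open>auto simp: M_def B_def V_def\<close>)
    finally show ?thesis .
  qed
  have main: "(\<Sum>c\<in>M. Ps c) \<le> (\<Sum>c\<in>B. Ps c) + (1/2^i) * ((\<Sum>c\<in>M. \<bar>\<nu> c\<bar>) + (\<Sum>c\<in>B. \<bar>\<nu> c\<bar>))"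
  proof (cases "M = {}")
    case True
    have "0 \<le> (\<Sum>c\<in>B. Ps c)" using Psnn Ti SiTi by (intro sum_nonneg) (auto simp: B_def)
    moreover have "0 \<le> (1/2^i) * ((\<Sum>c\<in>M. \<bar>\<nu> c\<bar>) + (\<Sum>c\<in>B. \<bar>\<nu> c\<bar>))"
      by (intro mult_nonneg_nonneg add_nonneg_nonneg sum_nonneg) auto
    ultimately show ?thesis using True by simp
  next
    case False
    have "Si \<noteq> Ti" using False by (auto simp: M_def)
    then have "Si \<subset> Ti" using SiTi by blast
    then have "card Si < card Ti" by (rule psubset_card_mono[OF fT])
    then have cSw: "card Si = w" using card by simp
    have cardMB: "card M \<le> card B"
    proof -
      have "card M + card (Si \<inter> Ts) = card (M \<union> (Si \<inter> Ts))"
        using fM fS by (intro card_Un_disjoint[symmetric]) (auto simp: M_def)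
      also have "\<dots> \<le> card (Ts \<inter> cells i)"
        by (rule card_mono) (use Ti SiTi in \<open>auto simp: M_def\<close>)
      also have "\<dots> \<le> card Si" using Tsc cSw by simp
      also have "card Si = card (Si \<inter> Ts) + card B"
      proof -
        have e: "Si = (Si \<inter> Ts) \<union> B" by (auto simp: B_def)
        have "card Si = card ((Si \<inter> Ts) \<union> B)" using e by (rule arg_cong)
        also have "\<dots> = card (Si \<inter> Ts) + card B"
          using fS fM by (intro card_Un_disjoint) (auto simp: B_def)
        finally show ?thesis .
      qed
      finally show ?thesis by simp
    qed
    define a where "a = Max (y ` M)"
    have aM: "y m \<le> a" if "m \<in> M" for m unfolding a_def using fM that by (intro Max_ge) auto
    have "a \<in> y ` M" unfolding a_def using fM False by (intro Max_in) auto
    then obtain m0 where m0: "m0 \<in> M" "a = y m0" by blast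
    have aS: "a \<le> y c" if "c \<in> Si" for c using greedy that m0 by (auto simp: M_def)
    have "(\<Sum>c\<in>M. Ps c) \<le> (\<Sum>c\<in>M. a + \<bar>\<nu> c\<bar> / 2^i)"
    proof (rule sum_mono)
      fix c assume c: "c \<in> M"
      then have "c \<in> cells i" using Ti by (auto simp: M_def)
      then have "Ps c = y c - \<nu> c / 2^i" using yeq by simp
      moreover have "- \<nu> c / 2^i \<le> \<bar>\<nu> c\<bar> / 2^i" by (intro divide_right_mono) auto
      ultimately show "Ps c \<le> a + \<bar>\<nu> c\<bar> / 2^i" using aM[OF c] by linarith
    qed
    also have "\<dots> = real (card M) * a + (1/2^i) * (\<Sum>c\<in>M. \<bar>\<nu> c\<bar>)"
      by (simp add: sum.distrib sum_divide_distrib)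
    also have "real (card M) * a \<le> (\<Sum>c\<in>B. Ps c + \<bar>\<nu> c\<bar> / 2^i)"
    proof (cases "a \<ge> 0")
      case True
      have "real (card M) * a \<le> real (card B) * a" using cardMB True by (intro mult_right_mono) auto
      also have "\<dots> = (\<Sum>c\<in>B. a)" by simp
      also have "\<dots> \<le> (\<Sum>c\<in>B. Ps c + \<bar>\<nu> c\<bar> / 2^i)"
      proof (rule sum_mono)
        fix c assume c: "c \<in> B"
        then have ci: "c \<in> cells i" "c \<in> Si" using Ti SiTi by (auto simp: B_def)
        have "a \<le> y c" by (rule aS[OF ci(2)])
        also have "y c = Ps c + \<nu> c / 2^i" using yeq ci by simp
        also have "\<nu> c / 2^i \<le> \<bar>\<nu> c\<bar> / 2^i" by (intro divide_right_mono) auto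
        finally show "a \<le> Ps c + \<bar>\<nu> c\<bar> / 2^i" by simp
      qed
      finally show ?thesis .
    next
      case False
      have "real (card M) * a \<le> 0" using False by (simp add: mult_nonneg_nonpos)
      also have "0 \<le> (\<Sum>c\<in>B. Ps c + \<bar>\<nu> c\<bar> / 2^i)"
        using Psnn Ti SiTi by (intro sum_nonneg add_nonneg_nonneg) (auto simp: B_def)
      finally show ?thesis .
    qed
    also have "(\<Sum>c\<in>B. Ps c + \<bar>\<nu> c\<bar> / 2^i) = (\<Sum>c\<in>B. Ps c) + (1/2^i) * (\<Sum>c\<in>B. \<bar>\<nu> c\<bar>)"
      by (simp add: sum.distrib sum_divide_distrib)
    finally show ?thesis by (simp add: algebra_simps)
  qed
  have "(1/2^i) * ((\<Sum>c\<in>M. \<bar>\<nu> c\<bar>) + (\<Sum>c\<in>B. \<bar>\<nu> c\<bar>)) \<le> (1/2^i) * (\<Sum>c\<in>V \<union> Si. \<bar>\<nu> c\<bar>)"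
    using noise by (intro mult_left_mono) auto
  then show ?thesis using split tailR tailB main unfolding V_def by linarith
qed



definition Tset :: "(nat \<Rightarrow> cell set) \<Rightarrow> nat \<Rightarrow> cell set" where
  "Tset S i = {c'\<in>cells i. \<exists>c\<in>S (i - 1). is_child c' c}"

lemma vr_facts:
  assumes "valid_run l w y S" "1 \<le> i" "i \<le> l"
  shows "S i \<subseteq> Tset S i \<and> card (S i) = min w (card (Tset S i)) \<and>
         (\<forall>c\<in>S i. \<forall>c'\<in>Tset S i - S i. y c' \<le> y c)"
proof -
  have "i \<in> {1..l}" using assms by simp
  then show ?thesis using assms(1) unfolding valid_run_def Let_def Tset_def by blast
qed

lemma Tset_cells: "Tset S i \<subseteq> cells i"
  unfolding Tset_def by blast

lemma S_cells:
  assumes "valid_run l w y S" "i \<le> l"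
  shows "S i \<subseteq> cells i"
proof (cases "i = 0")
  case True
  then show ?thesis using assms(1) cells0 unfolding valid_run_def by simp
next
  case False
  then show ?thesis using vr_facts[OF assms(1), of i] assms(2) Tset_cells[of S i] by auto
qed

lemma P_vec_nonneg: "(\<forall>p\<in>grid l. s p \<ge> 0) \<Longrightarrow> P_vec l s c \<ge> 0"
  unfolding P_vec_def using Pi_nonneg by simp

lemma LD_eq:
  assumes "C \<subseteq> cells i"
  shows "(\<Sum>c\<in>C. P_vec l s c) = (\<Sum>p\<in>{p\<in>grid l. key l i p \<in> C}. s p) / 2^i"
proof -
  have "(\<Sum>c\<in>C. P_vec l s c) = (\<Sum>c\<in>C. Pi_vec l s c / 2^i)"
    by (rule sum.cong) (use assms in \<open>auto simp: P_vec_def level_cells\<close>)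
  also have "\<dots> = (\<Sum>c\<in>C. Pi_vec l s c) / 2^i" by (simp add: sum_divide_distrib)
  also have "(\<Sum>c\<in>C. Pi_vec l s c) = (\<Sum>p\<in>{p\<in>grid l. key l i p \<in> C}. s p)" by (rule Pi_group[OF assms])
  finally show ?thesis .
qed

lemma sum_levels:
  "(\<Sum>c\<in>all_cells l - X. h c) = (\<Sum>i\<le>l. \<Sum>c\<in>cells i - X. h c)"
proof -
  have "all_cells l - X = (\<Union>i\<in>{..l}. cells i - X)" unfolding all_cells_def by blast
  then show ?thesis
    by (simp only:) (rule sum.UNION_disjoint, simp, simp, auto simp: cells_def)
qed

lemma greedy_bound:
  assumes s: "\<forall>p\<in>grid l. s p \<ge> 0"
    and vr: "valid_run l w (y_noisy l s \<nu>) S"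
    and Ts: "T_star \<in> trees l w"
  shows "(\<Sum>c\<in>all_cells l - (\<Union>i\<le>l. S i). P_vec l s c)
     \<le> 4 * (\<Sum>c\<in>all_cells l - T_star. P_vec l s c)
       + 2 * (\<Sum>i\<le>l. (1 / 2^i) * (\<Sum>c\<in>((T_star \<inter> cells i) - S i) \<union> S i. \<bar>\<nu> c\<bar>))"
proof -
  define U where "U = (\<Union>i\<le>l. S i)"
  define D where "D = (\<lambda>i. \<Sum>p\<in>{p\<in>grid l. key l i p \<notin> S i}. s p)"
  define E where "E = (\<lambda>i. \<Sum>p\<in>{p\<in>grid l. key l i p \<in> Tset S i - S i}. s p)"
  define LD where "LD = (\<lambda>i. \<Sum>c\<in>cells i - S i. P_vec l s c)"
  define EE where "EE = (\<lambda>i. \<Sum>c\<in>Tset S i - S i. P_vec l s c)"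
  define tl where "tl = (\<lambda>i. \<Sum>c\<in>cells i - T_star. P_vec l s c)"
  define nz where "nz = (\<lambda>i::nat. (1 / 2^i) * (\<Sum>c\<in>((T_star \<inter> cells i) - S i) \<union> S i. \<bar>\<nu> c\<bar>))"
  have LD_D: "LD i = D i / 2^i" for i
  proof -
    have "LD i = (\<Sum>p\<in>{p\<in>grid l. key l i p \<in> cells i - S i}. s p) / 2^i"
      unfolding LD_def by (rule LD_eq) auto
    also have "{p\<in>grid l. key l i p \<in> cells i - S i} = {p\<in>grid l. key l i p \<notin> S i}"
      using key_cells by blast
    finally show ?thesis unfolding D_def .
  qed
  have EE_E: "EE i = E i / 2^i" for i
    unfolding EE_def E_def by (rule LD_eq) (use Tset_cells in blast)
  have D_nonneg: "D i \<ge> 0" for i unfolding D_def using s by (intro sum_nonneg) auto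
  have E_nonneg: "E i \<ge> 0" for i unfolding E_def using s by (intro sum_nonneg) auto
  have D0: "D 0 = 0"
  proof -
    have "S 0 = {root}" using vr unfolding valid_run_def by simp
    then have e: "{p\<in>grid l. key l 0 p \<notin> S 0} = {}" using key0 by auto
    show ?thesis unfolding D_def e by simp
  qed
  have Dstep: "D i \<le> D (i-1) + E i" if i: "1 \<le> i" "i \<le> l" for i
  proof -
    let ?A = "{p\<in>grid l. key l (i-1) p \<notin> S (i-1)}"
    let ?B = "{p\<in>grid l. key l i p \<in> Tset S i - S i}"
    have sub: "{p\<in>grid l. key l i p \<notin> S i} \<subseteq> ?A \<union> ?B"
    proof
      fix p assume p: "p \<in> {p\<in>grid l. key l i p \<notin> S i}"
      show "p \<in> ?A \<union> ?B"
      proof (cases "key l (i-1) p \<in> S (i-1)")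
        case True
        have "is_child (key l i p) (key l (i-1) p)"
          using parent_key[OF i] i by (simp add: is_child_def level_def key_def)
        then have "key l i p \<in> Tset S i"
          using True key_cells[of p l i] p unfolding Tset_def by auto
        then show ?thesis using p by auto
      qed (use p in auto)
    qed
    have "D i \<le> (\<Sum>p\<in>?A \<union> ?B. s p)"
      unfolding D_def by (rule sum_mono2) (use sub s in auto)
    also have "\<dots> \<le> (\<Sum>p\<in>?A. s p) + (\<Sum>p\<in>?B. s p)"
    proof -
      have "(\<Sum>p\<in>?A \<union> ?B. s p) + (\<Sum>p\<in>?A \<inter> ?B. s p) = (\<Sum>p\<in>?A. s p) + (\<Sum>p\<in>?B. s p)"
        by (rule sum.union_inter) auto
      moreover have "(\<Sum>p\<in>?A \<inter> ?B. s p) \<ge> 0" using s by (intro sum_nonneg) auto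
      ultimately show ?thesis by linarith
    qed
    finally show ?thesis unfolding D_def E_def .
  qed
  have LDstep: "2 * LD i \<le> LD (i-1) + 2 * EE i" if i: "1 \<le> i" "i \<le> l" for i
  proof -
    have e: "(2::real)^i = 2 * 2^(i-1)" using i by (metis One_nat_def Suc_le_eq Suc_pred power_Suc)
    have "2 * LD i = 2 * D i / 2^i" by (simp add: LD_D)
    also have "\<dots> \<le> 2 * (D (i-1) + E i) / 2^i" using Dstep[OF i] by (intro divide_right_mono) auto
    also have "\<dots> = LD (i-1) + 2 * EE i" by (simp add: LD_D EE_E e field_simps)
    finally show ?thesis .
  qed
  have LD_nonneg: "LD i \<ge> 0" for i by (simp add: LD_D D_nonneg)
  have ind: "n \<le> l \<Longrightarrow> (\<Sum>i\<le>n. LD i) + LD n \<le> 2 * (\<Sum>i\<in>{1..n}. EE i)" for n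
  proof (induction n)
    case 0
    then show ?case by (simp add: LD_D D0)
  next
    case (Suc n)
    have "(\<Sum>i\<le>Suc n. LD i) + LD (Suc n) = (\<Sum>i\<le>n. LD i) + 2 * LD (Suc n)" by simp
    also have "\<dots> \<le> (\<Sum>i\<le>n. LD i) + LD n + 2 * EE (Suc n)" using LDstep[of "Suc n"] Suc.prems by simp
    also have "\<dots> \<le> 2 * (\<Sum>i\<in>{1..n}. EE i) + 2 * EE (Suc n)" using Suc by simp
    also have "\<dots> = 2 * (\<Sum>i\<in>{1..Suc n}. EE i)" by (simp add: algebra_simps)
    finally show ?case .
  qed
  have "(\<Sum>c\<in>all_cells l - U. P_vec l s c) = (\<Sum>i\<le>l. LD i)"
  proof -
    have "(\<Sum>c\<in>all_cells l - U. P_vec l s c) = (\<Sum>i\<le>l. \<Sum>c\<in>cells i - U. P_vec l s c)" by (rule sum_levels)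
    also have "\<dots> = (\<Sum>i\<le>l. LD i)"
    proof (rule sum.cong[OF refl])
      fix i assume i: "i \<in> {..l}"
      have "cells i - U = cells i - S i"
      proof
        show "cells i - U \<subseteq> cells i - S i" unfolding U_def using i by blast
        show "cells i - S i \<subseteq> cells i - U"
        proof
          fix c assume c: "c \<in> cells i - S i"
          have "c \<notin> S j" if j: "j \<le> l" for j
          proof (cases "j = i")
            case False
            then show ?thesis using S_cells[OF vr j] c cells_disj[of i j] by blast
          qed (use c in auto)
          then show "c \<in> cells i - U" using c unfolding U_def by blast
        qed
      qed
      then show "(\<Sum>c\<in>cells i - U. P_vec l s c) = LD i" unfolding LD_def by simp
    qed
    finally show ?thesis .
  qed
  also have "\<dots> \<le> 2 * (\<Sum>i\<in>{1..l}. EE i)" using ind[of l] LD_nonneg[of l] by linarith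
  also have "(\<Sum>i\<in>{1..l}. EE i) \<le> (\<Sum>i\<in>{1..l}. 2 * tl i + nz i)"
  proof (rule sum_mono)
    fix i assume i: "i \<in> {1..l}"
    then have i1: "1 \<le> i" "i \<le> l" by auto
    note f = vr_facts[OF vr i1]
    have Tsc: "card (T_star \<inter> cells i) \<le> w" using Ts i1 unfolding trees_def by blast
    have yeq: "\<forall>c\<in>cells i. y_noisy l s \<nu> c = P_vec l s c + \<nu> c / 2^i"
      by (auto simp: y_noisy_def P_vec_def level_cells add_divide_distrib)
    have Psnn: "\<forall>c\<in>cells i. P_vec l s c \<ge> 0" using P_vec_nonneg[OF s] by blast
    show "EE i \<le> 2 * tl i + nz i"
      unfolding EE_def tl_def nz_def
      by (rule level_bound[OF Tset_cells conjunct1[OF f] conjunct1[OF conjunct2[OF f]] conjunct2[OF conjunct2[OF f]] Tsc yeq Psnn])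
  qed
  also have "\<dots> \<le> (\<Sum>i\<le>l. 2 * tl i + nz i)"
  proof (rule sum_mono2)
    show "finite {..l}" by simp
    show "{1..l} \<subseteq> {..l}" by auto
    fix i
    have "tl i \<ge> 0" unfolding tl_def using P_vec_nonneg[OF s] by (intro sum_nonneg) auto
    moreover have "nz i \<ge> 0" unfolding nz_def by (intro mult_nonneg_nonneg sum_nonneg) auto
    ultimately show "0 \<le> 2 * tl i + nz i" by simp
  qed
  also have "\<dots> = 2 * (\<Sum>c\<in>all_cells l - T_star. P_vec l s c) + (\<Sum>i\<le>l. nz i)"
    unfolding tl_def sum_levels by (simp add: sum.distrib sum_distrib_left)
  finally show ?thesis unfolding U_def nz_def by simp
qed



lemma Ps_model:
  assumes s: "\<forall>p\<in>grid l. s p \<ge> 0" and T: "T \<in> trees l w"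
  shows "(\<lambda>c. if c \<in> T then P_vec l s c else 0) \<in> model l w"
proof -
  define y where "y = (\<lambda>c. if c \<in> T then P_vec l s c else 0)"
  have nn: "\<forall>c\<in>all_cells l. y c \<ge> 0" unfolding y_def using P_vec_nonneg[OF s] by auto
  have sup: "\<exists>T\<in>trees l w. \<forall>c\<in>all_cells l. y c \<noteq> 0 \<longrightarrow> c \<in> T"
    using T unfolding y_def by (intro bexI[of _ T]) auto
  have hier: "y c \<ge> 2 * (\<Sum>c'\<in>{c'\<in>all_cells l. is_child c' c}. y c')"
    if c: "c \<in> all_cells l" "level c < l" for c
  proof -
    obtain i where i: "c \<in> cells i" "i \<le> l" using c(1) unfolding all_cells_def by blast
    have li: "level c = i" by (rule level_cells[OF i(1)])
    have il: "i < l" using c(2) li by simp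
    have ch: "{c'\<in>all_cells l. is_child c' c} = {c'\<in>cells (Suc i). parent c' = c}"
      by (rule children_set[OF i(1) il])
    show ?thesis
    proof (cases "c \<in> T")
      case True
      have "(\<Sum>c'\<in>{c'\<in>all_cells l. is_child c' c}. y c') \<le> (\<Sum>c'\<in>{c'\<in>all_cells l. is_child c' c}. P_vec l s c')"
        unfolding y_def by (rule sum_mono) (use P_vec_nonneg[OF s] in auto)
      also have "\<dots> = (\<Sum>c'\<in>{c'\<in>all_cells l. is_child c' c}. Pi_vec l s c' / 2^Suc i)"
        unfolding ch by (rule sum.cong) (auto simp: P_vec_def level_cells)
      also have "\<dots> = (\<Sum>c'\<in>{c'\<in>all_cells l. is_child c' c}. Pi_vec l s c') / 2^Suc i"
        by (simp add: sum_divide_distrib)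
      also have "\<dots> = Pi_vec l s c / 2^Suc i" using Pi_children[OF i(1) il] by simp
      finally have "2 * (\<Sum>c'\<in>{c'\<in>all_cells l. is_child c' c}. y c') \<le> Pi_vec l s c / 2^i"
        by (simp add: field_simps)
      also have "\<dots> = y c" using True by (simp add: y_def P_vec_def li)
      finally show ?thesis .
    next
      case False
      have "y c' = 0" if "c' \<in> {c'\<in>all_cells l. is_child c' c}" for c'
      proof -
        have "level c' > 0" "parent c' = c" using that by (auto simp: is_child_def)
        then have "c' \<notin> T" using T False unfolding trees_def by auto
        then show ?thesis by (simp add: y_def)
      qed
      then have "(\<Sum>c'\<in>{c'\<in>all_cells l. is_child c' c}. y c') = 0" by simp
      then show ?thesis using False by (simp add: y_def)
    qed
  qed
  show ?thesis unfolding model_def y_def[symmetric] using nn sup hier by blast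
qed

lemma P_vec_diff: "P_vec l (\<lambda>p. s p - t p) c = P_vec l s c - P_vec l t c"
proof -
  have "Pi_vec l (\<lambda>p. s p - t p) c = (\<Sum>p\<in>grid l. (if in_cell l c p then s p else 0) - (if in_cell l c p then t p else 0))"
    unfolding Pi_vec_def by (rule sum.cong) auto
  also have "\<dots> = Pi_vec l s c - Pi_vec l t c" unfolding Pi_vec_def by (rule sum_subtractf)
  finally show ?thesis unfolding P_vec_def by (simp add: diff_divide_distrib)
qed

lemma emd_norm_nonneg: "0 \<le> emd_norm l v"
  using emd_norm_lower[of l "\<lambda>_. 0" v] by (simp add: grid_dist_nonneg)

lemma trees0: "trees l 0 = {}"
proof -
  have "False" if T: "T \<in> trees l 0" for T
  proof -
    have "root \<in> T \<inter> cells 0" using T cells0 unfolding trees_def by auto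
    moreover have "finite (T \<inter> cells 0)" by simp
    moreover have "card (T \<inter> cells 0) \<le> 0" using T unfolding trees_def by auto
    ultimately show False by auto
  qed
  then show ?thesis by blast
qed



lemma l1_tri: "l1_cells l (\<lambda>c. a c - b c) \<le> l1_cells l (\<lambda>c. a c - m c) + l1_cells l (\<lambda>c. m c - b c)"
  unfolding l1_cells_def sum.distrib[symmetric] by (rule sum_mono) linarith

lemma l1_sym: "l1_cells l (\<lambda>c. a c - b c) = l1_cells l (\<lambda>c. b c - a c)"
  unfolding l1_cells_def by (simp add: abs_minus_commute)

lemma K_facts:
  fixes \<eta> :: real
  assumes "0 < \<eta>" "\<eta> < 1"
  defines "K \<equiv> nat \<lceil>32 / \<eta>\<rceil>"
  shows "K \<ge> 1" "real K \<ge> 32 / \<eta>" "(2 * real K + 1)^2 \<le> 4489 / \<eta>^2"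
proof -
  have p: "32 / \<eta> > 0" using assms by simp
  have rK: "real K = real_of_int \<lceil>32 / \<eta>\<rceil>" unfolding K_def using p by simp
  show "real K \<ge> 32 / \<eta>" using rK by linarith
  then show "K \<ge> 1" using p by (metis One_nat_def Suc_leI gr0I le_less_trans less_le_not_le of_nat_0 le_refl)
  have up: "real K \<le> 32 / \<eta> + 1" using rK by linarith
  have "1 / \<eta> \<ge> 1" using assms by simp
  then have "2 * real K + 1 \<le> 67 / \<eta>" using up by (simp add: field_simps) 
  moreover have "0 \<le> 2 * real K + 1" by simp
  ultimately have "(2 * real K + 1)^2 \<le> (67 / \<eta>)^2" by (rule power_mono)
  also have "(67 / \<eta>)^2 = 4489 / \<eta>^2" by (simp add: power_divide)
  finally show "(2 * real K + 1)^2 \<le> 4489 / \<eta>^2" .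
qed

lemma main_lemma:
  fixes \<eta> :: real and k w l :: nat and s s_hat :: "point \<Rightarrow> real" and \<nu> y_star yh :: "cell \<Rightarrow> real"
    and S :: "nat \<Rightarrow> cell set" and T_star :: "cell set"
  assumes eta: "0 < \<eta>" "\<eta> < 1"
    and w: "w = nat \<lceil>10000 * real k / \<eta>^2\<rceil>"
    and s: "\<forall>p\<in>grid l. s p \<ge> 0"
    and vr: "valid_run l w (y_noisy l s \<nu>) S"
    and yh: "yh = (\<lambda>c. if c \<in> (\<Union>i\<le>l. S i) then y_noisy l s \<nu> c else 0)"
    and shat_opt: "\<forall>s'. (\<forall>p\<in>grid l. s' p \<ge> 0) \<longrightarrow>
            l1_cells l (\<lambda>c. yh c - P_vec l s_hat c) \<le> l1_cells l (\<lambda>c. yh c - P_vec l s' c)"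
    and ys: "y_star \<in> model l w"
    and ys_opt: "\<forall>y\<in>model l w. l1_cells l (\<lambda>c. P_vec l s c - y_star c) \<le> l1_cells l (\<lambda>c. P_vec l s c - y c)"
    and Ts: "T_star \<in> trees l w"
    and supp: "\<forall>c\<in>all_cells l. y_star c \<noteq> 0 \<longrightarrow> c \<in> T_star"
  shows "emd_norm l (\<lambda>p. s p - s_hat p)
        \<le> \<eta> * Inf {emd_norm l (\<lambda>p. s p - s' p) | s'. sparse l k s'}
          + 12 * (\<Sum>i\<le>l. (1 / 2^i) *
              (\<Sum>c\<in>((T_star \<inter> cells i) - S i) \<union> S i. \<bar>\<nu> c\<bar>))"
proof -
  define N where "N = (\<Sum>i\<le>l. (1 / 2^i) * (\<Sum>c\<in>((T_star \<inter> cells i) - S i) \<union> S i. \<bar>\<nu> c\<bar>))"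
  define tailS where "tailS = (\<Sum>c\<in>all_cells l - T_star. P_vec l s c)"
  define U where "U = (\<Union>i\<le>l. S i)"
  define K where "K = nat \<lceil>32 / \<eta>\<rceil>"
  note Kf = K_facts[OF eta, folded K_def]
  have Psnn: "P_vec l s c \<ge> 0" for c by (rule P_vec_nonneg[OF s])
  have k1: "k \<ge> 1"
  proof (rule ccontr)
    assume "\<not> k \<ge> 1"
    then have "k = 0" by simp
    then have "w = 0" using w by simp
    then show False using Ts trees0 by simp
  qed
  have tail_le: "tailS \<le> l1_cells l (\<lambda>c. P_vec l s c - y_star c)"
  proof -
    have "tailS = (\<Sum>c\<in>all_cells l - T_star. \<bar>P_vec l s c - y_star c\<bar>)"
      unfolding tailS_def by (rule sum.cong) (use supp Psnn in auto)
    also have "\<dots> \<le> l1_cells l (\<lambda>c. P_vec l s c - y_star c)"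
      unfolding l1_cells_def by (rule sum_mono2) auto
    finally show ?thesis .
  qed
  have sparse_bound: "16 * tailS \<le> \<eta> * emd_norm l (\<lambda>p. s p - s' p)" if sp: "sparse l k s'" for s'
  proof -
    define Z where "Z = {p\<in>grid l. s' p \<noteq> 0} \<union> {(0,0)}"
    have fZ: "finite Z" by (simp add: Z_def)
    have z0: "(0,0) \<in> Z" by (simp add: Z_def)
    have subZ: "{p\<in>grid l. s' p \<noteq> 0} \<subseteq> Z" by (auto simp: Z_def)
    have cZ: "card Z \<le> 2 * k"
    proof -
      have "card Z \<le> card {p\<in>grid l. s' p \<noteq> 0} + card {(0::nat,0::nat)}"
        unfolding Z_def by (rule card_Un_le)
      also have "\<dots> \<le> k + 1" using sp by (simp add: sparse_def)
      finally show ?thesis using k1 by simp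
    qed
    have cw: "card Z * (2*K+1)^2 \<le> w"
    proof -
      have "real (card Z * (2*K+1)^2) = real (card Z) * (2 * real K + 1)^2" by simp
      also have "\<dots> \<le> real (2*k) * (4489 / \<eta>^2)"
        using cZ Kf(3) by (intro mult_mono) auto
      also have "\<dots> \<le> 10000 * real k / \<eta>^2" using eta by (simp add: field_simps)
      also have "\<dots> \<le> real w"
      proof -
        have "10000 * real k / \<eta>^2 \<ge> 0" by simp
        then show ?thesis unfolding w by linarith
      qed
      finally show ?thesis by (simp only: of_nat_le_iff)
    qed
    have Tt: "Tg l K Z \<in> trees l w" by (rule Tg_tree[OF fZ z0 cw])
    have ym: "(\<lambda>c. if c \<in> Tg l K Z then P_vec l s c else 0) \<in> model l w" by (rule Ps_model[OF s Tt])
    have "tailS \<le> l1_cells l (\<lambda>c. P_vec l s c - (if c \<in> Tg l K Z then P_vec l s c else 0))"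
      using tail_le ys_opt ym by fastforce
    also have "\<dots> = (\<Sum>c\<in>all_cells l - Tg l K Z. P_vec l s c)"
    proof -
      have "l1_cells l (\<lambda>c. P_vec l s c - (if c \<in> Tg l K Z then P_vec l s c else 0))
          = (\<Sum>c\<in>all_cells l. if c \<in> Tg l K Z then 0 else P_vec l s c)"
        unfolding l1_cells_def by (rule sum.cong) (auto simp: Psnn abs_of_nonneg)
      also have "\<dots> = (\<Sum>c\<in>all_cells l - Tg l K Z. P_vec l s c)"
        by (simp add: sum.If_cases Diff_eq)
      finally show ?thesis .
    qed
    also have "\<dots> \<le> (2 / real K) * (\<Sum>p\<in>grid l. fZ l Z p * s p)"
      by (rule tail_bound[OF s Kf(1) fZ z0])
    also have "\<dots> \<le> (2 / real K) * emd_norm l (\<lambda>p. s p - s' p)"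
      by (intro mult_left_mono lower_sparse[OF fZ z0 subZ]) auto
    also have "\<dots> \<le> (\<eta> / 16) * emd_norm l (\<lambda>p. s p - s' p)"
    proof (rule mult_right_mono[OF _ emd_norm_nonneg])
      have "real K > 0" using Kf(1) by simp
      then show "2 / real K \<le> \<eta> / 16" using Kf(2) eta by (simp add: field_simps)
    qed
    finally show ?thesis by simp
  qed
  have inf_bound: "16 * tailS \<le> \<eta> * Inf {emd_norm l (\<lambda>p. s p - s' p) | s'. sparse l k s'}"
  proof -
    have "16 * tailS / \<eta> \<le> Inf {emd_norm l (\<lambda>p. s p - s' p) | s'. sparse l k s'}"
    proof (rule cInf_greatest)
      have "sparse l k (\<lambda>_. 0)" by (simp add: sparse_def)
      then show "{emd_norm l (\<lambda>p. s p - s' p) | s'. sparse l k s'} \<noteq> {}" by blast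
    next
      fix x assume "x \<in> {emd_norm l (\<lambda>p. s p - s' p) | s'. sparse l k s'}"
      then obtain s' where "sparse l k s'" "x = emd_norm l (\<lambda>p. s p - s' p)" by blast
      then show "16 * tailS / \<eta> \<le> x" using sparse_bound eta by (simp add: field_simps)
    qed
    then show ?thesis using eta by (simp add: field_simps)
  qed
  have l1_yh: "l1_cells l (\<lambda>c. P_vec l s c - yh c) \<le> N + (\<Sum>c\<in>all_cells l - U. P_vec l s c)"
  proof -
    have "l1_cells l (\<lambda>c. P_vec l s c - yh c)
        = (\<Sum>c\<in>all_cells l. if c \<in> U then \<bar>\<nu> c\<bar> / 2^level c else P_vec l s c)"
      unfolding l1_cells_def
    proof (rule sum.cong[OF refl])
      fix c
      show "\<bar>P_vec l s c - yh c\<bar> = (if c \<in> U then \<bar>\<nu> c\<bar> / 2^level c else P_vec l s c)"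
      proof (cases "c \<in> U")
        case True
        then have "P_vec l s c - yh c = - \<nu> c / 2^level c"
          by (simp add: yh U_def y_noisy_def P_vec_def diff_divide_distrib add_divide_distrib)
        then show ?thesis using True by (simp add: abs_divide)
      next
        case False
        then show ?thesis by (simp add: yh U_def Psnn abs_of_nonneg)
      qed
    qed
    also have "\<dots> = (\<Sum>c\<in>all_cells l \<inter> U. \<bar>\<nu> c\<bar> / 2^level c) + (\<Sum>c\<in>all_cells l - U. P_vec l s c)"
      by (simp add: sum.If_cases Diff_eq)
    also have "(\<Sum>c\<in>all_cells l \<inter> U. \<bar>\<nu> c\<bar> / 2^level c) \<le> N"
    proof -
      have Sc: "S i \<subseteq> cells i" if "i \<le> l" for i by (rule S_cells[OF vr that])
      have "all_cells l \<inter> U = (\<Union>i\<in>{..l}. S i)"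
        unfolding U_def all_cells_def using Sc by blast
      then have "(\<Sum>c\<in>all_cells l \<inter> U. \<bar>\<nu> c\<bar> / 2^level c) = (\<Sum>i\<le>l. \<Sum>c\<in>S i. \<bar>\<nu> c\<bar> / 2^level c)"
      proof (simp only:)
        show "(\<Sum>c\<in>(\<Union>i\<in>{..l}. S i). \<bar>\<nu> c\<bar> / 2^level c) = (\<Sum>i\<le>l. \<Sum>c\<in>S i. \<bar>\<nu> c\<bar> / 2^level c)"
        proof (rule sum.UNION_disjoint)
          show "finite {..l}" by simp
          show "\<forall>i\<in>{..l}. finite (S i)" using Sc by (meson atMost_iff finite_cells finite_subset)
          show "\<forall>i\<in>{..l}. \<forall>j\<in>{..l}. i \<noteq> j \<longrightarrow> S i \<inter> S j = {}"
            using Sc cells_disj by (meson atMost_iff disjoint_iff subsetD)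
        qed
      qed
      also have "\<dots> \<le> N"
        unfolding N_def
      proof (rule sum_mono)
        fix i assume i: "i \<in> {..l}"
        have Si: "S i \<subseteq> cells i" using Sc i by simp
        have "(\<Sum>c\<in>S i. \<bar>\<nu> c\<bar> / 2^level c) = (1/2^i) * (\<Sum>c\<in>S i. \<bar>\<nu> c\<bar>)"
          unfolding sum_distrib_left by (rule sum.cong) (use Si level_cells in auto)
        also have "\<dots> \<le> (1/2^i) * (\<Sum>c\<in>((T_star \<inter> cells i) - S i) \<union> S i. \<bar>\<nu> c\<bar>)"
        proof (rule mult_left_mono)
          have "finite ((T_star \<inter> cells i) - S i \<union> S i)"
            using Si by (meson Diff_subset finite_Un finite_cells finite_subset inf_le2)
          then show "(\<Sum>c\<in>S i. \<bar>\<nu> c\<bar>) \<le> (\<Sum>c\<in>((T_star \<inter> cells i) - S i) \<union> S i. \<bar>\<nu> c\<bar>)"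
            by (rule sum_mono2) auto
        qed simp
        finally show "(\<Sum>c\<in>S i. \<bar>\<nu> c\<bar> / 2^level c) \<le> (1/2^i) * (\<Sum>c\<in>((T_star \<inter> cells i) - S i) \<union> S i. \<bar>\<nu> c\<bar>)" .
      qed
      finally show ?thesis .
    qed
    finally show ?thesis by simp
  qed
  have gb: "(\<Sum>c\<in>all_cells l - U. P_vec l s c) \<le> 4 * tailS + 2 * N"
    unfolding U_def tailS_def N_def by (rule greedy_bound[OF s vr Ts])
  have "emd_norm l (\<lambda>p. s p - s_hat p) \<le> 2 * l1_cells l (P_vec l (\<lambda>p. s p - s_hat p))"
    by (rule emd_norm_quadtree)
  also have "P_vec l (\<lambda>p. s p - s_hat p) = (\<lambda>c. P_vec l s c - P_vec l s_hat c)"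
    by (rule ext) (rule P_vec_diff)
  also have "l1_cells l (\<lambda>c. P_vec l s c - P_vec l s_hat c)
      \<le> l1_cells l (\<lambda>c. P_vec l s c - yh c) + l1_cells l (\<lambda>c. yh c - P_vec l s_hat c)"
    by (rule l1_tri)
  also have "l1_cells l (\<lambda>c. yh c - P_vec l s_hat c) \<le> l1_cells l (\<lambda>c. P_vec l s c - yh c)"
    using shat_opt s l1_sym[of l yh "P_vec l s"] by auto
  finally have "emd_norm l (\<lambda>p. s p - s_hat p) \<le> 4 * l1_cells l (\<lambda>c. P_vec l s c - yh c)"
    by simp
  then show ?thesis using l1_yh gb inf_bound unfolding N_def by linarith
qed



theorem lemma4:
  shows "\<exists>C1 C2 :: real. C1 > 0 \<and> C2 > 0 \<and>
    (\<forall>(\<eta>::real) (k::nat) (w::nat) (l::nat) (s::point \<Rightarrow> real) (\<nu>::cell \<Rightarrow> real)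
       (S::nat \<Rightarrow> cell set) (s_hat::point \<Rightarrow> real) (y_star::cell \<Rightarrow> real) (T_star::cell set).
      0 < \<eta> \<and> \<eta> < 1 \<and>
      w = nat \<lceil>C1 * real k / \<eta>^2\<rceil> \<and>
      (\<forall>p\<in>grid l. s p \<ge> 0) \<and>
      valid_run l w (y_noisy l s \<nu>) S \<and>
      (let y_hat = (\<lambda>c. if c \<in> (\<Union>i\<le>l. S i) then y_noisy l s \<nu> c else 0) in
         (\<forall>p\<in>grid l. s_hat p \<ge> 0) \<and>
         (\<forall>s'. (\<forall>p\<in>grid l. s' p \<ge> 0) \<longrightarrow>
            l1_cells l (\<lambda>c. y_hat c - P_vec l s_hat c) \<le> l1_cells l (\<lambda>c. y_hat c - P_vec l s' c))) \<and>
      y_star \<in> model l w \<and>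
      (\<forall>y\<in>model l w. l1_cells l (\<lambda>c. P_vec l s c - y_star c) \<le> l1_cells l (\<lambda>c. P_vec l s c - y c)) \<and>
      T_star \<in> trees l w \<and>
      (\<forall>c\<in>all_cells l. y_star c \<noteq> 0 \<longrightarrow> c \<in> T_star)
      \<longrightarrow>
      emd_norm l (\<lambda>p. s p - s_hat p)
        \<le> \<eta> * Inf {emd_norm l (\<lambda>p. s p - s' p) | s'. sparse l k s'}
          + C2 * (\<Sum>i\<le>l. (1 / 2^i) *
              (\<Sum>c\<in>((T_star \<inter> cells i) - S i) \<union> S i. \<bar>\<nu> c\<bar>)))"
  apply (rule exI[where x="10000::real"], rule exI[where x="12::real"])
  apply (intro conjI allI impI)
    apply simp
   apply simp
  apply (unfold Let_def)
  apply (elim conjE)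
  apply (rule main_lemma[OF _ _ _ _ _ refl])
  apply assumption+
  done


end
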